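(* Let $\mathcal{C}$ be a triangulated category and let $d=\infty$ or $d$ an odd positive integer. Suppose that to every object $X$ of $\mathcal{C}$ is assigned an element $\rho(X)\in\mathbb{R}(d)$ such that: (a) $\rho(\Sigma X)=q\rho(X)$ for all $X$; (b) $\rho(X\oplus Y)=\rho(X)+\rho(Y)$ for all $X,Y$; (c) for every exact triangle $X\to Y\to Z\rightsquigarrow$ there is $\phi\in\mathbb{R}_{\geq0}(d)$ with $\rho(X)-\rho(Y)+\rho(Z)=(q+1)\phi$. Then for every morphism $f:X\to Y$ the formula $$\rho(f):=\frac{\rho(Y)-\rho(\operatorname{cone}(f))+q\rho(X)}{q+1}$$ (a well-defined quotient in $\mathbb{R}(d)$) determines a $d$-periodic rank function on $\mathcal{C}$. If in addition all $\rho(X)$ lie in $\mathbb{Z}(d)$ and the elements $\phi$ in (c) lie in $\mathbb{Z}(d)$, then the resulting rank function is integral.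
   Context: $\mathbb{R}(d)=\mathbb{R}[q,q^{-1}]$ if $d=\infty$ and $\mathbb{R}[q]/(q^d-1)$ if $d<\infty$; $\mathbb{Z}(d)$ is defined likewise with integer coefficients; $\mathbb{R}_{\geq0}(d)$ is the set of elements represented by (Laurent) polynomials with nonnegative coefficients; $\phi\geq\psi$ means $\phi-\psi\in\mathbb{R}_{\geq0}(d)$. A $d$-periodic rank function on $\mathcal{C}$ (translation $\Sigma$) assigns to each morphism $f$ an element $\rho(f)\in\mathbb{R}_{\geq0}(d)$ such that: $\rho(\Sigma f)=q\rho(f)$; $\rho(f\oplus g)=\rho(f)+\rho(g)$; $\rho(f)+\rho(g)=\rho(\mathrm{id}_Y)$ for each exact triangle $X\xrightarrow{f}Y\xrightarrow{g}Z\rightsquigarrow$; $\rho\begin{pmatrix} f&h\\0&g\end{pmatrix}\geq\rho(f)+\rho(g)$ for $f:X\to Y$, $g:Z\to W$, $h:Z\to Y$; and $\rho(gf)\leq\rho(f)$, $\rho(gf)\leq\rho(g)$ whenever $gf$ is defined. It is integral if all values lie in $\mathbb{Z}_{\geq0}(d)$. *)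

theory Defs
  imports Complex_Main "HOL-Library.Extended_Nat"
begin

text \<open>An element of R(d) is represented by its coefficient function int => real:
  for d = infinity a finitely supported function (Laurent polynomial, coefficient of q^n at n);
  for finite d > 0 a d-periodic function (coefficient of q^(n mod d) in R[q]/(q^d - 1)).\<close>

type_synonym rd = "int \<Rightarrow> real"

definition in_Rd :: "enat \<Rightarrow> rd \<Rightarrow> bool" where
  "in_Rd d c \<longleftrightarrow> (case d of \<infinity> \<Rightarrow> finite {n. c n \<noteq> 0}
                          | enat m \<Rightarrow> (\<forall>n. c (n + int m) = c n))"

definition rd_add :: "rd \<Rightarrow> rd \<Rightarrow> rd" where
  "rd_add a b = (\<lambda>n. a n + b n)"

definition rd_sub :: "rd \<Rightarrow> rd \<Rightarrow> rd" where
  "rd_sub a b = (\<lambda>n. a n - b n)"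

definition rd_zero :: rd where
  "rd_zero = (\<lambda>n. 0)"

text \<open>multiplication by q\<close>
definition rd_q :: "rd \<Rightarrow> rd" where
  "rd_q a = (\<lambda>n. a (n - 1))"

definition rd_q1 :: "rd \<Rightarrow> rd" where
  "rd_q1 a = rd_add (rd_q a) a"

definition rd_nonneg :: "enat \<Rightarrow> rd \<Rightarrow> bool" where
  "rd_nonneg d a \<longleftrightarrow> in_Rd d a \<and> (\<forall>n. a n \<ge> 0)"

definition rd_int :: "enat \<Rightarrow> rd \<Rightarrow> bool" where
  "rd_int d a \<longleftrightarrow> in_Rd d a \<and> (\<forall>n. a n \<in> \<int>)"

definition rd_ge :: "enat \<Rightarrow> rd \<Rightarrow> rd \<Rightarrow> bool" where
  "rd_ge d a b \<longleftrightarrow> rd_nonneg d (rd_sub a b)"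

record ('o, 'm) tricat =
  Ob   :: "'o set"
  Mor  :: "'m set"
  dom  :: "'m \<Rightarrow> 'o"
  cod  :: "'m \<Rightarrow> 'o"
  cmp  :: "'m \<Rightarrow> 'm \<Rightarrow> 'm"      \<comment> \<open>cmp g f = g o f\<close>
  idm  :: "'o \<Rightarrow> 'm"
  madd :: "'m \<Rightarrow> 'm \<Rightarrow> 'm"
  mneg :: "'m \<Rightarrow> 'm"
  zer  :: "'o \<Rightarrow> 'o \<Rightarrow> 'm"
  dsum :: "'o \<Rightarrow> 'o \<Rightarrow> 'o"
  in1  :: "'o \<Rightarrow> 'o \<Rightarrow> 'm"
  in2  :: "'o \<Rightarrow> 'o \<Rightarrow> 'm"
  pr1  :: "'o \<Rightarrow> 'o \<Rightarrow> 'm"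
  pr2  :: "'o \<Rightarrow> 'o \<Rightarrow> 'm"
  shO  :: "'o \<Rightarrow> 'o"            \<comment> \<open>translation functor Sigma on objects\<close>
  shM  :: "'m \<Rightarrow> 'm"
  tri  :: "('m \<times> 'm \<times> 'm) set" \<comment> \<open>exact triangles (f, g, h): X -> Y -> Z -> Sigma X\<close>

definition hom :: "('o, 'm, 'e) tricat_scheme \<Rightarrow> 'o \<Rightarrow> 'o \<Rightarrow> 'm set" where
  "hom C X Y = {f \<in> Mor C. dom C f = X \<and> cod C f = Y}"

definition is_iso :: "('o, 'm, 'e) tricat_scheme \<Rightarrow> 'm \<Rightarrow> bool" where
  "is_iso C f \<longleftrightarrow> f \<in> Mor C \<and> (\<exists>g \<in> hom C (cod C f) (dom C f).
      cmp C g f = idm C (dom C f) \<and> cmp C f g = idm C (cod C f))"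

definition is_zero_obj :: "('o, 'm, 'e) tricat_scheme \<Rightarrow> 'o \<Rightarrow> bool" where
  "is_zero_obj C Z \<longleftrightarrow> Z \<in> Ob C \<and> idm C Z = zer C Z Z"

definition is_tri_shape :: "('o, 'm, 'e) tricat_scheme \<Rightarrow> 'm \<Rightarrow> 'm \<Rightarrow> 'm \<Rightarrow> bool" where
  "is_tri_shape C f g h \<longleftrightarrow> f \<in> Mor C \<and> g \<in> Mor C \<and> h \<in> Mor C \<and>
      cod C f = dom C g \<and> cod C g = dom C h \<and> cod C h = shO C (dom C f)"

definition tri_mor :: "('o, 'm, 'e) tricat_scheme \<Rightarrow> 'm \<times> 'm \<times> 'm \<Rightarrow> 'm \<times> 'm \<times> 'm
                        \<Rightarrow> 'm \<Rightarrow> 'm \<Rightarrow> 'm \<Rightarrow> bool" where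
  "tri_mor C T T' a b c \<longleftrightarrow> (case T of (f, g, h) \<Rightarrow> case T' of (f', g', h') \<Rightarrow>
      a \<in> hom C (dom C f) (dom C f') \<and> b \<in> hom C (dom C g) (dom C g') \<and>
      c \<in> hom C (dom C h) (dom C h') \<and>
      cmp C b f = cmp C f' a \<and> cmp C c g = cmp C g' b \<and> cmp C (shM C a) h = cmp C h' c)"

definition category :: "('o, 'm, 'e) tricat_scheme \<Rightarrow> bool" where
  "category C \<longleftrightarrow>
    (\<forall>f \<in> Mor C. dom C f \<in> Ob C \<and> cod C f \<in> Ob C) \<and>
    (\<forall>X \<in> Ob C. idm C X \<in> hom C X X) \<and>
    (\<forall>f \<in> Mor C. \<forall>g \<in> Mor C. cod C f = dom C g \<longrightarrow> cmp C g f \<in> hom C (dom C f) (cod C g)) \<and>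
    (\<forall>f \<in> Mor C. \<forall>g \<in> Mor C. \<forall>h \<in> Mor C. cod C f = dom C g \<and> cod C g = dom C h \<longrightarrow>
        cmp C h (cmp C g f) = cmp C (cmp C h g) f) \<and>
    (\<forall>f \<in> Mor C. cmp C f (idm C (dom C f)) = f \<and> cmp C (idm C (cod C f)) f = f)"

definition additive :: "('o, 'm, 'e) tricat_scheme \<Rightarrow> bool" where
  "additive C \<longleftrightarrow> category C \<and>
    \<comment> \<open>hom sets are abelian groups\<close>
    (\<forall>X \<in> Ob C. \<forall>Y \<in> Ob C. zer C X Y \<in> hom C X Y \<and>
       (\<forall>f \<in> hom C X Y. \<forall>g \<in> hom C X Y. madd C f g \<in> hom C X Y \<and> madd C f g = madd C g f) \<and>
       (\<forall>f \<in> hom C X Y. \<forall>g \<in> hom C X Y. \<forall>h \<in> hom C X Y.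
           madd C (madd C f g) h = madd C f (madd C g h)) \<and>
       (\<forall>f \<in> hom C X Y. madd C f (zer C X Y) = f \<and> mneg C f \<in> hom C X Y \<and>
           madd C f (mneg C f) = zer C X Y)) \<and>
    \<comment> \<open>composition is bilinear\<close>
    (\<forall>X \<in> Ob C. \<forall>Y \<in> Ob C. \<forall>Z \<in> Ob C.
       (\<forall>f \<in> hom C X Y. \<forall>g \<in> hom C Y Z. \<forall>g' \<in> hom C Y Z.
           cmp C (madd C g g') f = madd C (cmp C g f) (cmp C g' f)) \<and>
       (\<forall>f \<in> hom C X Y. \<forall>f' \<in> hom C X Y. \<forall>g \<in> hom C Y Z.
           cmp C g (madd C f f') = madd C (cmp C g f) (cmp C g f'))) \<and>
    \<comment> \<open>zero object\<close>
    (\<exists>Z. is_zero_obj C Z) \<and>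
    \<comment> \<open>biproducts\<close>
    (\<forall>X \<in> Ob C. \<forall>Y \<in> Ob C. dsum C X Y \<in> Ob C \<and>
       in1 C X Y \<in> hom C X (dsum C X Y) \<and> in2 C X Y \<in> hom C Y (dsum C X Y) \<and>
       pr1 C X Y \<in> hom C (dsum C X Y) X \<and> pr2 C X Y \<in> hom C (dsum C X Y) Y \<and>
       cmp C (pr1 C X Y) (in1 C X Y) = idm C X \<and> cmp C (pr2 C X Y) (in2 C X Y) = idm C Y \<and>
       cmp C (pr2 C X Y) (in1 C X Y) = zer C X Y \<and> cmp C (pr1 C X Y) (in2 C X Y) = zer C Y X \<and>
       madd C (cmp C (in1 C X Y) (pr1 C X Y)) (cmp C (in2 C X Y) (pr2 C X Y)) = idm C (dsum C X Y))"

definition translation :: "('o, 'm, 'e) tricat_scheme \<Rightarrow> bool" where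
  "translation C \<longleftrightarrow>
    (\<forall>X \<in> Ob C. shO C X \<in> Ob C \<and> shM C (idm C X) = idm C (shO C X)) \<and>
    (\<forall>f \<in> Mor C. shM C f \<in> hom C (shO C (dom C f)) (shO C (cod C f))) \<and>
    (\<forall>f \<in> Mor C. \<forall>g \<in> Mor C. cod C f = dom C g \<longrightarrow> shM C (cmp C g f) = cmp C (shM C g) (shM C f)) \<and>
    (\<forall>X \<in> Ob C. \<forall>Y \<in> Ob C. \<forall>f \<in> hom C X Y. \<forall>g \<in> hom C X Y.
        shM C (madd C f g) = madd C (shM C f) (shM C g)) \<and>
    (\<forall>X \<in> Ob C. \<forall>Y \<in> Ob C. bij_betw (shM C) (hom C X Y) (hom C (shO C X) (shO C Y))) \<and>
    (\<forall>Y \<in> Ob C. \<exists>X \<in> Ob C. \<exists>u \<in> hom C (shO C X) Y. is_iso C u)"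

definition triangulated :: "('o, 'm, 'e) tricat_scheme \<Rightarrow> bool" where
  "triangulated C \<longleftrightarrow> additive C \<and> translation C \<and>
    (\<forall>(f, g, h) \<in> tri C. is_tri_shape C f g h) \<and>
    \<comment> \<open>TR1: closed under isomorphism\<close>
    (\<forall>T \<in> tri C. \<forall>f' g' h' a b c. is_tri_shape C f' g' h' \<and> tri_mor C T (f', g', h') a b c \<and>
        is_iso C a \<and> is_iso C b \<and> is_iso C c \<longrightarrow> (f', g', h') \<in> tri C) \<and>
    \<comment> \<open>TR1: X -id-> X -> 0 -> Sigma X is exact\<close>
    (\<forall>X \<in> Ob C. \<forall>Z. is_zero_obj C Z \<longrightarrow> (idm C X, zer C X Z, zer C Z (shO C X)) \<in> tri C) \<and>
    \<comment> \<open>TR1: every morphism extends to an exact triangle\<close>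
    (\<forall>f \<in> Mor C. \<exists>g h. (f, g, h) \<in> tri C) \<and>
    \<comment> \<open>TR2: rotation\<close>
    (\<forall>f g h. is_tri_shape C f g h \<longrightarrow> ((f, g, h) \<in> tri C \<longleftrightarrow> (g, h, mneg C (shM C f)) \<in> tri C)) \<and>
    \<comment> \<open>TR3: completion of morphisms of triangles\<close>
    (\<forall>f g h f' g' h' a b. (f, g, h) \<in> tri C \<and> (f', g', h') \<in> tri C \<and>
        a \<in> hom C (dom C f) (dom C f') \<and> b \<in> hom C (dom C g) (dom C g') \<and>
        cmp C b f = cmp C f' a \<longrightarrow> (\<exists>c. tri_mor C (f, g, h) (f', g', h') a b c)) \<and>
    \<comment> \<open>TR4: octahedral axiom\<close>
    (\<forall>f g u w v j v' w'. f \<in> Mor C \<and> g \<in> Mor C \<and> cod C f = dom C g \<and>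
        (f, u, w) \<in> tri C \<and> (g, v, j) \<in> tri C \<and> (cmp C g f, v', w') \<in> tri C \<longrightarrow>
        (\<exists>a b. (a, b, cmp C (shM C u) j) \<in> tri C \<and>
           cmp C a u = cmp C v' g \<and> cmp C w' a = w \<and> cmp C b v' = v \<and>
           cmp C j b = cmp C (shM C f) w'))"

definition mdsum :: "('o, 'm, 'e) tricat_scheme \<Rightarrow> 'm \<Rightarrow> 'm \<Rightarrow> 'm" where
  "mdsum C f g = (let X = dom C f; Y = cod C f; Z = dom C g; W = cod C g in
     madd C (cmp C (in1 C Y W) (cmp C f (pr1 C X Z))) (cmp C (in2 C Y W) (cmp C g (pr2 C X Z))))"

text \<open>the matrix ((f, h), (0, g)) : X (+) Z -> Y (+) W for f : X -> Y, g : Z -> W, h : Z -> Y\<close>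
definition mtri :: "('o, 'm, 'e) tricat_scheme \<Rightarrow> 'm \<Rightarrow> 'm \<Rightarrow> 'm \<Rightarrow> 'm" where
  "mtri C f h g = (let X = dom C f; Y = cod C f; Z = dom C g; W = cod C g in
     madd C (mdsum C f g) (cmp C (in1 C Y W) (cmp C h (pr2 C X Z))))"

definition rank_function :: "('o, 'm, 'e) tricat_scheme \<Rightarrow> enat \<Rightarrow> ('m \<Rightarrow> rd) \<Rightarrow> bool" where
  "rank_function C d r \<longleftrightarrow>
    (\<forall>f \<in> Mor C. rd_nonneg d (r f)) \<and>
    (\<forall>f \<in> Mor C. r (shM C f) = rd_q (r f)) \<and>
    (\<forall>f \<in> Mor C. \<forall>g \<in> Mor C. r (mdsum C f g) = rd_add (r f) (r g)) \<and>
    (\<forall>(f, g, h) \<in> tri C. rd_add (r f) (r g) = r (idm C (cod C f))) \<and>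
    (\<forall>f \<in> Mor C. \<forall>g \<in> Mor C. \<forall>h \<in> hom C (dom C g) (cod C f).
        rd_ge d (r (mtri C f h g)) (rd_add (r f) (r g))) \<and>
    (\<forall>f \<in> Mor C. \<forall>g \<in> Mor C. cod C f = dom C g \<longrightarrow>
        rd_ge d (r f) (r (cmp C g f)) \<and> rd_ge d (r g) (r (cmp C g f)))"

definition integral_rank_function :: "('o, 'm, 'e) tricat_scheme \<Rightarrow> enat \<Rightarrow> ('m \<Rightarrow> rd) \<Rightarrow> bool" where
  "integral_rank_function C d r \<longleftrightarrow> rank_function C d r \<and> (\<forall>f \<in> Mor C. rd_int d (r f))"

definition cone :: "('o, 'm, 'e) tricat_scheme \<Rightarrow> 'm \<Rightarrow> 'o" where
  "cone C f = cod C (fst (SOME gh. (f, fst gh, snd gh) \<in> tri C))"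

definition rk_num :: "('o, 'm, 'e) tricat_scheme \<Rightarrow> ('o \<Rightarrow> rd) \<Rightarrow> 'm \<Rightarrow> rd" where
  "rk_num C \<rho> f = rd_add (rd_sub (\<rho> (cod C f)) (\<rho> (cone C f))) (rd_q (\<rho> (dom C f)))"

definition rk_of :: "('o, 'm, 'e) tricat_scheme \<Rightarrow> enat \<Rightarrow> ('o \<Rightarrow> rd) \<Rightarrow> 'm \<Rightarrow> rd" where
  "rk_of C d \<rho> f = (THE r. in_Rd d r \<and> rd_q1 r = rk_num C \<rho> f)"

end

theory Submission
  imports Defs
begin

locale tc =
  fixes C :: "('o,'m) tricat"
  assumes TRI: "triangulated C"
begin

lemma additive: "additive C" using TRI unfolding triangulated_def by blast
lemma cat: "category C" using additive unfolding additive_def by blast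
lemma transl: "translation C" using TRI unfolding triangulated_def by blast

lemma cat_ax:
  "(\<forall>f \<in> Mor C. dom C f \<in> Ob C \<and> cod C f \<in> Ob C)"
  "(\<forall>X \<in> Ob C. idm C X \<in> hom C X X)"
  "(\<forall>f \<in> Mor C. \<forall>g \<in> Mor C. cod C f = dom C g \<longrightarrow> cmp C g f \<in> hom C (dom C f) (cod C g))"
  "(\<forall>f \<in> Mor C. \<forall>g \<in> Mor C. \<forall>h \<in> Mor C. cod C f = dom C g \<and> cod C g = dom C h \<longrightarrow>
        cmp C h (cmp C g f) = cmp C (cmp C h g) f)"
  "(\<forall>f \<in> Mor C. cmp C f (idm C (dom C f)) = f \<and> cmp C (idm C (cod C f)) f = f)"
  using cat unfolding category_def by blast+

lemma add_ax:
  "\<forall>X \<in> Ob C. \<forall>Y \<in> Ob C. zer C X Y \<in> hom C X Y \<and>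
       (\<forall>f \<in> hom C X Y. \<forall>g \<in> hom C X Y. madd C f g \<in> hom C X Y \<and> madd C f g = madd C g f) \<and>
       (\<forall>f \<in> hom C X Y. \<forall>g \<in> hom C X Y. \<forall>h \<in> hom C X Y.
           madd C (madd C f g) h = madd C f (madd C g h)) \<and>
       (\<forall>f \<in> hom C X Y. madd C f (zer C X Y) = f \<and> mneg C f \<in> hom C X Y \<and>
           madd C f (mneg C f) = zer C X Y)"
  "\<forall>X \<in> Ob C. \<forall>Y \<in> Ob C. \<forall>Z \<in> Ob C.
       (\<forall>f \<in> hom C X Y. \<forall>g \<in> hom C Y Z. \<forall>g' \<in> hom C Y Z.
           cmp C (madd C g g') f = madd C (cmp C g f) (cmp C g' f)) \<and>
       (\<forall>f \<in> hom C X Y. \<forall>f' \<in> hom C X Y. \<forall>g \<in> hom C Y Z.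
           cmp C g (madd C f f') = madd C (cmp C g f) (cmp C g f'))"
  "\<exists>Z. is_zero_obj C Z"
  "\<forall>X \<in> Ob C. \<forall>Y \<in> Ob C. dsum C X Y \<in> Ob C \<and>
       in1 C X Y \<in> hom C X (dsum C X Y) \<and> in2 C X Y \<in> hom C Y (dsum C X Y) \<and>
       pr1 C X Y \<in> hom C (dsum C X Y) X \<and> pr2 C X Y \<in> hom C (dsum C X Y) Y \<and>
       cmp C (pr1 C X Y) (in1 C X Y) = idm C X \<and> cmp C (pr2 C X Y) (in2 C X Y) = idm C Y \<and>
       cmp C (pr2 C X Y) (in1 C X Y) = zer C X Y \<and> cmp C (pr1 C X Y) (in2 C X Y) = zer C Y X \<and>
       madd C (cmp C (in1 C X Y) (pr1 C X Y)) (cmp C (in2 C X Y) (pr2 C X Y)) = idm C (dsum C X Y)"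
  using additive unfolding additive_def by blast+

lemma hom_iff: "f \<in> hom C X Y \<longleftrightarrow> f \<in> Mor C \<and> dom C f = X \<and> cod C f = Y"
  by (simp add: hom_def)

lemma mor_hom: "f \<in> Mor C \<Longrightarrow> f \<in> hom C (dom C f) (cod C f)" by (simp add: hom_def)
lemma hom_mor: "f \<in> hom C X Y \<Longrightarrow> f \<in> Mor C" by (simp add: hom_def)
lemma hom_dom: "f \<in> hom C X Y \<Longrightarrow> dom C f = X" by (simp add: hom_def)
lemma hom_cod: "f \<in> hom C X Y \<Longrightarrow> cod C f = Y" by (simp add: hom_def)
lemma hom_ob1: "f \<in> hom C X Y \<Longrightarrow> X \<in> Ob C"
  using cat_ax(1) by (auto simp: hom_iff)
lemma hom_ob2: "f \<in> hom C X Y \<Longrightarrow> Y \<in> Ob C"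
  using cat_ax(1) by (auto simp: hom_iff)

lemma id_hom: "X \<in> Ob C \<Longrightarrow> idm C X \<in> hom C X X"
  using cat_ax(2) by blast
lemma comp_hom: "f \<in> hom C X Y \<Longrightarrow> g \<in> hom C Y Z \<Longrightarrow> cmp C g f \<in> hom C X Z"
proof -
  assume h: "f \<in> hom C X Y" "g \<in> hom C Y Z"
  have m: "f \<in> Mor C" "g \<in> Mor C" "cod C f = dom C g" using h by (auto simp: hom_iff)
  have "cmp C g f \<in> hom C (dom C f) (cod C g)" using cat_ax(3)[rule_format, OF m] .
  then show ?thesis using h by (simp add: hom_iff)
qed
lemma assoc: "f \<in> hom C X Y \<Longrightarrow> g \<in> hom C Y Z \<Longrightarrow> h \<in> hom C Z W \<Longrightarrow>
   cmp C h (cmp C g f) = cmp C (cmp C h g) f"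
proof -
  assume a: "f \<in> hom C X Y" "g \<in> hom C Y Z" "h \<in> hom C Z W"
  have m: "f \<in> Mor C" "g \<in> Mor C" "h \<in> Mor C" "cod C f = dom C g \<and> cod C g = dom C h" using a by (auto simp: hom_iff)
  show ?thesis using cat_ax(4)[rule_format, OF m] .
qed
lemma id_r: "f \<in> hom C X Y \<Longrightarrow> cmp C f (idm C X) = f"
  using cat_ax(5) by (auto simp: hom_iff)
lemma id_l: "f \<in> hom C X Y \<Longrightarrow> cmp C (idm C Y) f = f"
  using cat_ax(5) by (auto simp: hom_iff)

lemma grp:
  assumes "X \<in> Ob C" "Y \<in> Ob C"
  shows "zer C X Y \<in> hom C X Y"
   "\<And>f g. f \<in> hom C X Y \<Longrightarrow> g \<in> hom C X Y \<Longrightarrow> madd C f g \<in> hom C X Y"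
   "\<And>f g. f \<in> hom C X Y \<Longrightarrow> g \<in> hom C X Y \<Longrightarrow> madd C f g = madd C g f"
   "\<And>f g h. f \<in> hom C X Y \<Longrightarrow> g \<in> hom C X Y \<Longrightarrow> h \<in> hom C X Y \<Longrightarrow> madd C (madd C f g) h = madd C f (madd C g h)"
   "\<And>f. f \<in> hom C X Y \<Longrightarrow> madd C f (zer C X Y) = f"
   "\<And>f. f \<in> hom C X Y \<Longrightarrow> mneg C f \<in> hom C X Y"
   "\<And>f. f \<in> hom C X Y \<Longrightarrow> madd C f (mneg C f) = zer C X Y"
  using add_ax(1)[rule_format, OF assms] by blast+

lemma zer_hom: "X \<in> Ob C \<Longrightarrow> Y \<in> Ob C \<Longrightarrow> zer C X Y \<in> hom C X Y"
  using grp(1) .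
lemma add_hom: "f \<in> hom C X Y \<Longrightarrow> g \<in> hom C X Y \<Longrightarrow> madd C f g \<in> hom C X Y"
  using grp(2)[OF hom_ob1 hom_ob2] by blast
lemma add_comm: "f \<in> hom C X Y \<Longrightarrow> g \<in> hom C X Y \<Longrightarrow> madd C f g = madd C g f"
  using grp(3)[OF hom_ob1 hom_ob2] by blast
lemma add_assoc: "f \<in> hom C X Y \<Longrightarrow> g \<in> hom C X Y \<Longrightarrow> h \<in> hom C X Y \<Longrightarrow>
  madd C (madd C f g) h = madd C f (madd C g h)"
  using grp(4)[OF hom_ob1 hom_ob2] by blast
lemma add_zer: "f \<in> hom C X Y \<Longrightarrow> madd C f (zer C X Y) = f"
  using grp(5)[OF hom_ob1 hom_ob2] by blast
lemma neg_hom: "f \<in> hom C X Y \<Longrightarrow> mneg C f \<in> hom C X Y"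
  using grp(6)[OF hom_ob1 hom_ob2] by blast
lemma add_neg: "f \<in> hom C X Y \<Longrightarrow> madd C f (mneg C f) = zer C X Y"
  using grp(7)[OF hom_ob1 hom_ob2] by blast
lemma comp_add_l: "f \<in> hom C X Y \<Longrightarrow> g \<in> hom C Y Z \<Longrightarrow> g' \<in> hom C Y Z \<Longrightarrow>
   cmp C (madd C g g') f = madd C (cmp C g f) (cmp C g' f)"
proof -
  assume h: "f \<in> hom C X Y" "g \<in> hom C Y Z" "g' \<in> hom C Y Z"
  note a = add_ax(2)[rule_format, OF hom_ob1[OF h(1)] hom_ob2[OF h(1)] hom_ob2[OF h(2)]]
  show ?thesis using a h by blast
qed
lemma comp_add_r: "f \<in> hom C X Y \<Longrightarrow> f' \<in> hom C X Y \<Longrightarrow> g \<in> hom C Y Z \<Longrightarrow>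
   cmp C g (madd C f f') = madd C (cmp C g f) (cmp C g f')"
proof -
  assume h: "f \<in> hom C X Y" "f' \<in> hom C X Y" "g \<in> hom C Y Z"
  note a = add_ax(2)[rule_format, OF hom_ob1[OF h(1)] hom_ob2[OF h(1)] hom_ob2[OF h(3)]]
  show ?thesis using a h by blast
qed

lemma zer_add: "f \<in> hom C X Y \<Longrightarrow> madd C (zer C X Y) f = f"
proof -
  assume h: "f \<in> hom C X Y"
  have z: "zer C X Y \<in> hom C X Y" using h hom_ob1 hom_ob2 zer_hom by blast
  have "madd C (zer C X Y) f = madd C f (zer C X Y)" using add_comm[OF z h] .
  then show ?thesis using add_zer[OF h] by simp
qed

lemma add_self: "x \<in> hom C X Y \<Longrightarrow> madd C x x = x \<Longrightarrow> x = zer C X Y"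
proof -
  assume h: "x \<in> hom C X Y" "madd C x x = x"
  have n: "mneg C x \<in> hom C X Y" using neg_hom[OF h(1)] .
  have "x = madd C x (madd C x (mneg C x))" using add_neg[OF h(1)] add_zer[OF h(1)] by simp
  also have "\<dots> = madd C (madd C x x) (mneg C x)" using add_assoc[OF h(1) h(1) n] by simp
  also have "\<dots> = zer C X Y" using h(2) add_neg[OF h(1)] by simp
  finally show ?thesis .
qed

lemma neg_unique: "x \<in> hom C X Y \<Longrightarrow> y \<in> hom C X Y \<Longrightarrow> madd C x y = zer C X Y \<Longrightarrow> y = mneg C x"
proof -
  assume h: "x \<in> hom C X Y" "y \<in> hom C X Y" "madd C x y = zer C X Y"
  have n: "mneg C x \<in> hom C X Y" using neg_hom[OF h(1)] .
  have "y = madd C y (madd C x (mneg C x))" using add_neg[OF h(1)] add_zer[OF h(2)] by simp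
  also have "\<dots> = madd C (madd C y x) (mneg C x)" using add_assoc[OF h(2) h(1) n] by simp
  also have "\<dots> = madd C (madd C x y) (mneg C x)" using add_comm[OF h(2) h(1)] by simp
  also have "\<dots> = mneg C x" using h(3) zer_add[OF n] by simp
  finally show ?thesis .
qed

lemma neg_neg: "x \<in> hom C X Y \<Longrightarrow> mneg C (mneg C x) = x"
proof -
  assume h: "x \<in> hom C X Y"
  have n: "mneg C x \<in> hom C X Y" using neg_hom[OF h] .
  have "madd C (mneg C x) x = zer C X Y" using add_comm[OF n h] add_neg[OF h] by simp
  from neg_unique[OF n h this] show ?thesis by simp
qed

lemma neg_inj: "x \<in> hom C X Y \<Longrightarrow> y \<in> hom C X Y \<Longrightarrow> mneg C x = mneg C y \<Longrightarrow> x = y"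
proof -
  assume h: "x \<in> hom C X Y" "y \<in> hom C X Y" "mneg C x = mneg C y"
  have "x = mneg C (mneg C x)" using neg_neg[OF h(1)] by simp
  also have "\<dots> = y" using h(3) neg_neg[OF h(2)] by simp
  finally show ?thesis .
qed

lemma sub_zero: "x \<in> hom C X Y \<Longrightarrow> y \<in> hom C X Y \<Longrightarrow> madd C x (mneg C y) = zer C X Y \<Longrightarrow> x = y"
proof -
  assume h: "x \<in> hom C X Y" "y \<in> hom C X Y" "madd C x (mneg C y) = zer C X Y"
  have "mneg C y = mneg C x" using neg_unique[OF h(1) neg_hom[OF h(2)] h(3)] .
  then show ?thesis using neg_inj[OF h(1) h(2)] by simp
qed

lemma sub_add: "x \<in> hom C X Y \<Longrightarrow> y \<in> hom C X Y \<Longrightarrow> madd C (madd C x (mneg C y)) y = x"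
proof -
  assume h: "x \<in> hom C X Y" "y \<in> hom C X Y"
  have n: "mneg C y \<in> hom C X Y" using neg_hom[OF h(2)] .
  have "madd C (madd C x (mneg C y)) y = madd C x (madd C (mneg C y) y)" using add_assoc[OF h(1) n h(2)] .
  also have "madd C (mneg C y) y = zer C X Y" using add_comm[OF n h(2)] add_neg[OF h(2)] by simp
  finally show ?thesis using add_zer[OF h(1)] by simp
qed

lemma neg_zer: "X \<in> Ob C \<Longrightarrow> Y \<in> Ob C \<Longrightarrow> mneg C (zer C X Y) = zer C X Y"
proof -
  assume h: "X \<in> Ob C" "Y \<in> Ob C"
  have z: "zer C X Y \<in> hom C X Y" using zer_hom[OF h] .
  show ?thesis using neg_unique[OF z z add_zer[OF z]] by simp
qed

lemma comp_zer_l: "f \<in> hom C X Y \<Longrightarrow> Z \<in> Ob C \<Longrightarrow> cmp C (zer C Y Z) f = zer C X Z"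
proof -
  assume h: "f \<in> hom C X Y" "Z \<in> Ob C"
  have z: "zer C Y Z \<in> hom C Y Z" using h hom_ob2 zer_hom by blast
  have "cmp C (zer C Y Z) f = cmp C (madd C (zer C Y Z) (zer C Y Z)) f" using add_zer[OF z] by simp
  also have "\<dots> = madd C (cmp C (zer C Y Z) f) (cmp C (zer C Y Z) f)" using comp_add_l h z by blast
  finally show ?thesis using add_self[OF comp_hom[OF h(1) z]] by simp
qed

lemma comp_zer_r: "g \<in> hom C Y Z \<Longrightarrow> X \<in> Ob C \<Longrightarrow> cmp C g (zer C X Y) = zer C X Z"
proof -
  assume h: "g \<in> hom C Y Z" "X \<in> Ob C"
  have z: "zer C X Y \<in> hom C X Y" using h hom_ob1 zer_hom by blast
  have "cmp C g (zer C X Y) = cmp C g (madd C (zer C X Y) (zer C X Y))" using add_zer[OF z] by simp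
  also have "\<dots> = madd C (cmp C g (zer C X Y)) (cmp C g (zer C X Y))" using comp_add_r h z by blast
  finally show ?thesis using add_self[OF comp_hom[OF z h(1)]] by simp
qed

lemma comp_neg_l: "f \<in> hom C X Y \<Longrightarrow> g \<in> hom C Y Z \<Longrightarrow> cmp C (mneg C g) f = mneg C (cmp C g f)"
proof -
  assume h: "f \<in> hom C X Y" "g \<in> hom C Y Z"
  have "madd C (cmp C g f) (cmp C (mneg C g) f) = cmp C (madd C g (mneg C g)) f"
    using comp_add_l[OF h(1) h(2) neg_hom[OF h(2)]] by simp
  also have "\<dots> = zer C X Z" using add_neg[OF h(2)] comp_zer_l[OF h(1) hom_ob2[OF h(2)]] by simp
  finally show ?thesis using neg_unique[OF comp_hom[OF h] comp_hom[OF h(1) neg_hom[OF h(2)]]] by simp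
qed

lemma comp_neg_r: "f \<in> hom C X Y \<Longrightarrow> g \<in> hom C Y Z \<Longrightarrow> cmp C g (mneg C f) = mneg C (cmp C g f)"
proof -
  assume h: "f \<in> hom C X Y" "g \<in> hom C Y Z"
  have "madd C (cmp C g f) (cmp C g (mneg C f)) = cmp C g (madd C f (mneg C f))"
    using comp_add_r[OF h(1) neg_hom[OF h(1)] h(2)] by simp
  also have "\<dots> = zer C X Z" using add_neg[OF h(1)] comp_zer_r[OF h(2) hom_ob1[OF h(1)]] by simp
  finally show ?thesis using neg_unique[OF comp_hom[OF h] comp_hom[OF neg_hom[OF h(1)] h(2)]] by simp
qed

lemma zero_ex: "\<exists>Z. is_zero_obj C Z" using add_ax(3) .
lemma zero_ob: "is_zero_obj C Z \<Longrightarrow> Z \<in> Ob C" by (simp add: is_zero_obj_def)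
lemma zero_to: "is_zero_obj C Z \<Longrightarrow> f \<in> hom C X Z \<Longrightarrow> f = zer C X Z"
proof -
  assume h: "is_zero_obj C Z" "f \<in> hom C X Z"
  have "f = cmp C (idm C Z) f" using id_l[OF h(2)] by simp
  also have "\<dots> = cmp C (zer C Z Z) f" using h(1) unfolding is_zero_obj_def by simp
  also have "\<dots> = zer C X Z" using comp_zer_l[OF h(2)] zero_ob[OF h(1)] by simp
  finally show ?thesis .
qed
lemma zero_from: "is_zero_obj C Z \<Longrightarrow> f \<in> hom C Z X \<Longrightarrow> f = zer C Z X"
proof -
  assume h: "is_zero_obj C Z" "f \<in> hom C Z X"
  have "f = cmp C f (idm C Z)" using id_r[OF h(2)] by simp
  also have "\<dots> = cmp C f (zer C Z Z)" using h(1) unfolding is_zero_obj_def by simp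
  also have "\<dots> = zer C Z X" using comp_zer_r[OF h(2)] zero_ob[OF h(1)] by simp
  finally show ?thesis .
qed

lemma bip:
  assumes "X \<in> Ob C" "Y \<in> Ob C"
  shows "dsum C X Y \<in> Ob C" "in1 C X Y \<in> hom C X (dsum C X Y)" "in2 C X Y \<in> hom C Y (dsum C X Y)"
    "pr1 C X Y \<in> hom C (dsum C X Y) X" "pr2 C X Y \<in> hom C (dsum C X Y) Y"
    "cmp C (pr1 C X Y) (in1 C X Y) = idm C X" "cmp C (pr2 C X Y) (in2 C X Y) = idm C Y"
    "cmp C (pr2 C X Y) (in1 C X Y) = zer C X Y" "cmp C (pr1 C X Y) (in2 C X Y) = zer C Y X"
    "madd C (cmp C (in1 C X Y) (pr1 C X Y)) (cmp C (in2 C X Y) (pr2 C X Y)) = idm C (dsum C X Y)"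
  using add_ax(4)[rule_format, OF assms] by blast+

lemma sh_ob: "X \<in> Ob C \<Longrightarrow> shO C X \<in> Ob C" using transl unfolding translation_def by blast
lemma sh_hom: "f \<in> hom C X Y \<Longrightarrow> shM C f \<in> hom C (shO C X) (shO C Y)"
  using transl unfolding translation_def hom_def by blast
lemma sh_id: "X \<in> Ob C \<Longrightarrow> shM C (idm C X) = idm C (shO C X)"
  using transl unfolding translation_def by blast
lemma tr_ax: "\<forall>f \<in> Mor C. \<forall>g \<in> Mor C. cod C f = dom C g \<longrightarrow> shM C (cmp C g f) = cmp C (shM C g) (shM C f)"
  using transl unfolding translation_def by blast
lemma sh_comp: "f \<in> hom C X Y \<Longrightarrow> g \<in> hom C Y Z \<Longrightarrow> shM C (cmp C g f) = cmp C (shM C g) (shM C f)"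
  using tr_ax by (auto simp: hom_iff)
lemma sh_add: "f \<in> hom C X Y \<Longrightarrow> g \<in> hom C X Y \<Longrightarrow> shM C (madd C f g) = madd C (shM C f) (shM C g)"
  using transl hom_ob1 hom_ob2 unfolding translation_def by blast
lemma sh_zer: "X \<in> Ob C \<Longrightarrow> Y \<in> Ob C \<Longrightarrow> shM C (zer C X Y) = zer C (shO C X) (shO C Y)"
proof -
  assume h: "X \<in> Ob C" "Y \<in> Ob C"
  have z: "zer C X Y \<in> hom C X Y" using zer_hom[OF h] .
  have "shM C (zer C X Y) = shM C (madd C (zer C X Y) (zer C X Y))" using add_zer[OF z] by simp
  also have "\<dots> = madd C (shM C (zer C X Y)) (shM C (zer C X Y))" using sh_add[OF z z] .
  finally show ?thesis using add_self[OF sh_hom[OF z]] by simp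
qed
lemma sh_neg: "f \<in> hom C X Y \<Longrightarrow> shM C (mneg C f) = mneg C (shM C f)"
proof -
  assume h: "f \<in> hom C X Y"
  have "madd C (shM C f) (shM C (mneg C f)) = shM C (madd C f (mneg C f))" using sh_add[OF h neg_hom[OF h]] by simp
  also have "\<dots> = zer C (shO C X) (shO C Y)" using add_neg[OF h] sh_zer hom_ob1[OF h] hom_ob2[OF h] by simp
  finally show ?thesis using neg_unique[OF sh_hom[OF h] sh_hom[OF neg_hom[OF h]]] by simp
qed
lemma sh_bij: "X \<in> Ob C \<Longrightarrow> Y \<in> Ob C \<Longrightarrow> bij_betw (shM C) (hom C X Y) (hom C (shO C X) (shO C Y))"
  using transl unfolding translation_def by blast
lemma sh_full: "X \<in> Ob C \<Longrightarrow> Y \<in> Ob C \<Longrightarrow> c \<in> hom C (shO C X) (shO C Y) \<Longrightarrow> \<exists>s \<in> hom C X Y. shM C s = c"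
proof -
  assume h: "X \<in> Ob C" "Y \<in> Ob C" "c \<in> hom C (shO C X) (shO C Y)"
  have "shM C ` hom C X Y = hom C (shO C X) (shO C Y)" using sh_bij[OF h(1,2)] unfolding bij_betw_def by blast
  then have "c \<in> shM C ` hom C X Y" using h(3) by simp
  then obtain s where "c = shM C s" "s \<in> hom C X Y" by (erule imageE)
  then show ?thesis by blast
qed
lemma sh_faith: "s \<in> hom C X Y \<Longrightarrow> t \<in> hom C X Y \<Longrightarrow> shM C s = shM C t \<Longrightarrow> s = t"
proof -
  assume h: "s \<in> hom C X Y" "t \<in> hom C X Y" "shM C s = shM C t"
  have "inj_on (shM C) (hom C X Y)" using sh_bij[OF hom_ob1[OF h(1)] hom_ob2[OF h(1)]] unfolding bij_betw_def by blast
  then show ?thesis using h unfolding inj_on_def by blast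
qed

end

context tc begin

lemma tri_ax1:
  "\<forall>(f, g, h) \<in> tri C. is_tri_shape C f g h"
  using TRI unfolding triangulated_def by (elim conjE) assumption

lemma tri_ax2:
  "\<forall>T \<in> tri C. \<forall>f' g' h' a b c. is_tri_shape C f' g' h' \<and> tri_mor C T (f', g', h') a b c \<and>
        is_iso C a \<and> is_iso C b \<and> is_iso C c \<longrightarrow> (f', g', h') \<in> tri C"
  using TRI unfolding triangulated_def by (elim conjE) assumption

lemma tri_ax3:
  "\<forall>X \<in> Ob C. \<forall>Z. is_zero_obj C Z \<longrightarrow> (idm C X, zer C X Z, zer C Z (shO C X)) \<in> tri C"
  using TRI unfolding triangulated_def by (elim conjE) assumption

lemma tri_ax4:
  "\<forall>f \<in> Mor C. \<exists>g h. (f, g, h) \<in> tri C"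
  using TRI unfolding triangulated_def by (elim conjE) assumption

lemma tri_ax5:
  "\<forall>f g h. is_tri_shape C f g h \<longrightarrow> ((f, g, h) \<in> tri C \<longleftrightarrow> (g, h, mneg C (shM C f)) \<in> tri C)"
  using TRI unfolding triangulated_def by (elim conjE) assumption

lemma tri_ax6:
  "\<forall>f g h f' g' h' a b. (f, g, h) \<in> tri C \<and> (f', g', h') \<in> tri C \<and>
        a \<in> hom C (dom C f) (dom C f') \<and> b \<in> hom C (dom C g) (dom C g') \<and>
        cmp C b f = cmp C f' a \<longrightarrow> (\<exists>c. tri_mor C (f, g, h) (f', g', h') a b c)"
  using TRI unfolding triangulated_def by (elim conjE) assumption

lemma tri_ax7:
  "\<forall>f g u w v j v' w'. f \<in> Mor C \<and> g \<in> Mor C \<and> cod C f = dom C g \<and>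
        (f, u, w) \<in> tri C \<and> (g, v, j) \<in> tri C \<and> (cmp C g f, v', w') \<in> tri C \<longrightarrow>
        (\<exists>a b. (a, b, cmp C (shM C u) j) \<in> tri C \<and>
           cmp C a u = cmp C v' g \<and> cmp C w' a = w \<and> cmp C b v' = v \<and>
           cmp C j b = cmp C (shM C f) w')"
  using TRI unfolding triangulated_def by (elim conjE) assumption

lemma tri_shape: "(f, g, h) \<in> tri C \<Longrightarrow> is_tri_shape C f g h"
  using tri_ax1 by blast

lemma tri_homs:
  assumes "(f, g, h) \<in> tri C"
  shows "f \<in> hom C (dom C f) (cod C f)" "g \<in> hom C (cod C f) (cod C g)"
        "h \<in> hom C (cod C g) (shO C (dom C f))"
  using tri_shape[OF assms] unfolding is_tri_shape_def hom_def by auto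

lemma shape_homs: "f \<in> hom C X Y \<Longrightarrow> g \<in> hom C Y Z \<Longrightarrow> h \<in> hom C Z (shO C X) \<Longrightarrow> is_tri_shape C f g h"
  unfolding is_tri_shape_def hom_def by auto

lemma rot: "(f, g, h) \<in> tri C \<Longrightarrow> (g, h, mneg C (shM C f)) \<in> tri C"
  using tri_ax5 tri_shape by blast

lemma rot_back: "is_tri_shape C f g h \<Longrightarrow> (g, h, mneg C (shM C f)) \<in> tri C \<Longrightarrow> (f, g, h) \<in> tri C"
  using tri_ax5 by blast

lemma tr1: "X \<in> Ob C \<Longrightarrow> is_zero_obj C Z \<Longrightarrow> (idm C X, zer C X Z, zer C Z (shO C X)) \<in> tri C"
  using tri_ax3 by blast

lemma tr1_ex: "f \<in> Mor C \<Longrightarrow> \<exists>g h. (f, g, h) \<in> tri C"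
  using tri_ax4 by blast

lemma tri_mor_iff: "tri_mor C (f, g, h) (f', g', h') a b c \<longleftrightarrow>
      a \<in> hom C (dom C f) (dom C f') \<and> b \<in> hom C (dom C g) (dom C g') \<and>
      c \<in> hom C (dom C h) (dom C h') \<and>
      cmp C b f = cmp C f' a \<and> cmp C c g = cmp C g' b \<and> cmp C (shM C a) h = cmp C h' c"
  by (simp add: tri_mor_def)

lemma tr3: "(f, g, h) \<in> tri C \<Longrightarrow> (f', g', h') \<in> tri C \<Longrightarrow>
        a \<in> hom C (dom C f) (dom C f') \<Longrightarrow> b \<in> hom C (dom C g) (dom C g') \<Longrightarrow>
        cmp C b f = cmp C f' a \<Longrightarrow> \<exists>c. tri_mor C (f, g, h) (f', g', h') a b c"
  using tri_ax6 by blast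

lemma isoclose: "T \<in> tri C \<Longrightarrow> is_tri_shape C f' g' h' \<Longrightarrow> tri_mor C T (f', g', h') a b c \<Longrightarrow>
        is_iso C a \<Longrightarrow> is_iso C b \<Longrightarrow> is_iso C c \<Longrightarrow> (f', g', h') \<in> tri C"
  using tri_ax2 by blast

lemma tr4: "f \<in> Mor C \<Longrightarrow> g \<in> Mor C \<Longrightarrow> cod C f = dom C g \<Longrightarrow>
        (f, u, w) \<in> tri C \<Longrightarrow> (g, v, j) \<in> tri C \<Longrightarrow> (cmp C g f, v', w') \<in> tri C \<Longrightarrow>
        (\<exists>a b. (a, b, cmp C (shM C u) j) \<in> tri C \<and>
           cmp C a u = cmp C v' g \<and> cmp C w' a = w \<and> cmp C b v' = v \<and>
           cmp C j b = cmp C (shM C f) w')"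
  using tri_ax7 by blast

lemma iso_intro: "e \<in> hom C M N \<Longrightarrow> e' \<in> hom C N M \<Longrightarrow> cmp C e' e = idm C M \<Longrightarrow> cmp C e e' = idm C N \<Longrightarrow> is_iso C e"
  unfolding is_iso_def using hom_dom hom_cod hom_mor by metis

lemma id_iso: "X \<in> Ob C \<Longrightarrow> is_iso C (idm C X)"
  using iso_intro[OF id_hom id_hom] id_l[OF id_hom] by blast

lemma zdom: "X \<in> Ob C \<Longrightarrow> Y \<in> Ob C \<Longrightarrow> dom C (zer C X Y) = X"
  using hom_dom[OF zer_hom] .
lemma zcod: "X \<in> Ob C \<Longrightarrow> Y \<in> Ob C \<Longrightarrow> cod C (zer C X Y) = Y"
  using hom_cod[OF zer_hom] .

lemma ZC: assumes "(f, g, h) \<in> tri C" shows "cmp C g f = zer C (dom C f) (cod C g)"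
proof -
  obtain Z0 where z: "is_zero_obj C Z0" using zero_ex by blast
  note H = tri_homs[OF assms]
  have X: "dom C f \<in> Ob C" using hom_ob1[OF H(1)] .
  have Z: "cod C g \<in> Ob C" using hom_ob2[OF H(2)] .
  have Z0: "Z0 \<in> Ob C" using zero_ob[OF z] .
  have T0: "(idm C (dom C f), zer C (dom C f) Z0, zer C Z0 (shO C (dom C f))) \<in> tri C" using tr1[OF X z] .
  have a: "idm C (dom C f) \<in> hom C (dom C (idm C (dom C f))) (dom C f)"
    using id_hom[OF X] hom_dom[OF id_hom[OF X]] by simp
  have b: "f \<in> hom C (dom C (zer C (dom C f) Z0)) (dom C g)"
    using H(1) zdom[OF X Z0] hom_dom[OF H(2)] by simp
  obtain c where c: "tri_mor C (idm C (dom C f), zer C (dom C f) Z0, zer C Z0 (shO C (dom C f))) (f, g, h) (idm C (dom C f)) f c"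
    using tr3[OF T0 assms a b] by blast
  have c1: "c \<in> hom C Z0 (cod C g)" and c2: "cmp C c (zer C (dom C f) Z0) = cmp C g f"
    using c H(3) unfolding tri_mor_iff using zdom[OF Z0 sh_ob[OF X]] hom_dom[OF H(3)] by auto
  show ?thesis using c2 comp_zer_r[OF c1 X] by simp
qed

end

context tc begin

lemma assoc2: "f \<in> hom C X Y \<Longrightarrow> g \<in> hom C Y Z \<Longrightarrow> h \<in> hom C Z W \<Longrightarrow>
   cmp C (cmp C h g) f = cmp C h (cmp C g f)"
  using assoc by metis

lemma tri_z1: "X \<in> Ob C \<Longrightarrow> is_zero_obj C Z \<Longrightarrow> (zer C X Z, zer C Z (shO C X), mneg C (idm C (shO C X))) \<in> tri C"
  using rot[OF tr1] sh_id by metis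

lemma COV:
  assumes tr: "(f, g, h) \<in> tri C" and t: "t \<in> hom C T (cod C f)"
    and gt: "cmp C g t = zer C T (cod C g)"
  shows "\<exists>s \<in> hom C T (dom C f). cmp C f s = t"
proof -
  obtain Z0 where z: "is_zero_obj C Z0" using zero_ex by blast
  have Z0: "Z0 \<in> Ob C" using zero_ob[OF z] .
  note H = tri_homs[OF tr]
  define X Y Z where "X = dom C f" "Y = cod C f" "Z = cod C g"
  have f: "f \<in> hom C X Y" and g: "g \<in> hom C Y Z" and h: "h \<in> hom C Z (shO C X)" using H X_Y_Z_def by auto
  have T: "T \<in> Ob C" using hom_ob1[OF t] .
  have X: "X \<in> Ob C" "Y \<in> Ob C" "Z \<in> Ob C" using hom_ob1[OF f] hom_ob2[OF f] hom_ob2[OF g] by auto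
  have R: "(g, h, mneg C (shM C f)) \<in> tri C" using rot[OF tr] .
  have S: "(zer C T Z0, zer C Z0 (shO C T), mneg C (idm C (shO C T))) \<in> tri C" using tri_z1[OF T z] .
  have a: "t \<in> hom C (dom C (zer C T Z0)) (dom C g)" using t zdom[OF T Z0] hom_dom[OF g] X_Y_Z_def by simp
  have b: "zer C Z0 Z \<in> hom C (dom C (zer C Z0 (shO C T))) (dom C h)"
    using zer_hom[OF Z0 X(3)] zdom[OF Z0 sh_ob[OF T]] hom_dom[OF h] by simp
  have ab: "cmp C (zer C Z0 Z) (zer C T Z0) = cmp C g t"
    using comp_zer_l[OF zer_hom[OF T Z0] X(3)] gt X_Y_Z_def by simp
  obtain c where c: "tri_mor C (zer C T Z0, zer C Z0 (shO C T), mneg C (idm C (shO C T))) (g, h, mneg C (shM C f)) t (zer C Z0 Z) c"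
    using tr3[OF S R a b ab] by blast
  have dn: "dom C (mneg C (idm C (shO C T))) = shO C T" using hom_dom[OF neg_hom[OF id_hom[OF sh_ob[OF T]]]] .
  have dn2: "dom C (mneg C (shM C f)) = shO C X" using hom_dom[OF neg_hom[OF sh_hom[OF f]]] .
  have c1: "c \<in> hom C (shO C T) (shO C X)" and c2: "cmp C (shM C t) (mneg C (idm C (shO C T))) = cmp C (mneg C (shM C f)) c"
    using c unfolding tri_mor_iff using dn dn2 by auto
  have st: "shM C t \<in> hom C (shO C T) (shO C Y)" using sh_hom[OF t] X_Y_Z_def by simp
  have "cmp C (shM C t) (mneg C (idm C (shO C T))) = mneg C (shM C t)"
    using comp_neg_r[OF id_hom[OF sh_ob[OF T]] st] id_r[OF st] by simp
  moreover have "cmp C (mneg C (shM C f)) c = mneg C (cmp C (shM C f) c)"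
    using comp_neg_l[OF c1 sh_hom[OF f]] .
  ultimately have "shM C t = cmp C (shM C f) c"
    using c2 neg_inj[OF st comp_hom[OF c1 sh_hom[OF f]]] by simp
  obtain s where s: "s \<in> hom C T X" "shM C s = c" using sh_full[OF T X(1) c1] by blast
  have "shM C t = shM C (cmp C f s)" using \<open>shM C t = cmp C (shM C f) c\<close> sh_comp[OF s(1) f] s(2) by simp
  then have "t = cmp C f s" using sh_faith[OF _ comp_hom[OF s(1) f]] t X_Y_Z_def by simp
  then show ?thesis using s(1) X_Y_Z_def by blast
qed

lemma iso_tri:
  assumes e: "e \<in> hom C M N" and ie: "is_iso C e" and z: "is_zero_obj C Z"
  shows "(e, zer C N Z, zer C Z (shO C M)) \<in> tri C"
proof -
  have M: "M \<in> Ob C" and N: "N \<in> Ob C" and Z: "Z \<in> Ob C" using hom_ob1[OF e] hom_ob2[OF e] zero_ob[OF z] by auto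
  have SM: "shO C M \<in> Ob C" using sh_ob[OF M] .
  have T: "(idm C M, zer C M Z, zer C Z (shO C M)) \<in> tri C" using tr1[OF M z] .
  have sh: "is_tri_shape C e (zer C N Z) (zer C Z (shO C M))"
    using shape_homs[OF e zer_hom[OF N Z] zer_hom[OF Z SM]] .
  have m: "tri_mor C (idm C M, zer C M Z, zer C Z (shO C M)) (e, zer C N Z, zer C Z (shO C M)) (idm C M) e (idm C Z)"
    unfolding tri_mor_iff
    using id_hom[OF M] id_hom[OF Z] e hom_dom[OF id_hom[OF M]] hom_dom[OF e] zdom[OF M Z] zdom[OF N Z] zdom[OF Z SM]
      id_l[OF zer_hom[OF M Z]] comp_zer_l[OF e Z] sh_id[OF M] id_l[OF zer_hom[OF Z SM]] id_r[OF zer_hom[OF Z SM]]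
    by simp
  show ?thesis using isoclose[OF T sh m id_iso[OF M] ie id_iso[OF Z]] .
qed

lemma iso_inv: "is_iso C e \<Longrightarrow> e \<in> hom C M N \<Longrightarrow> \<exists>e' \<in> hom C N M. is_iso C e' \<and> cmp C e' e = idm C M \<and> cmp C e e' = idm C N"
proof -
  assume i: "is_iso C e" and e: "e \<in> hom C M N"
  obtain g where g: "g \<in> hom C N M" "cmp C g e = idm C M" "cmp C e g = idm C N"
    using i e unfolding is_iso_def using hom_dom[OF e] hom_cod[OF e] by auto
  have "is_iso C g" using iso_intro[OF g(1) e g(3) g(2)] .
  then show ?thesis using g by blast
qed

lemma dsum_zero:
  assumes a: "is_zero_obj C A" and b: "is_zero_obj C B"
  shows "is_zero_obj C (dsum C A B)"
proof -
  have A: "A \<in> Ob C" and B: "B \<in> Ob C" using zero_ob a b by auto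
  note bp = bip[OF A B]
  let ?D = "dsum C A B"
  have D: "?D \<in> Ob C" using bp(1) .
  have "pr1 C A B = zer C ?D A" using zero_to[OF a bp(4)] .
  then have 1: "cmp C (in1 C A B) (pr1 C A B) = zer C ?D ?D" using comp_zer_r[OF bp(2) D] by simp
  have "pr2 C A B = zer C ?D B" using zero_to[OF b bp(5)] .
  then have 2: "cmp C (in2 C A B) (pr2 C A B) = zer C ?D ?D" using comp_zer_r[OF bp(3) D] by simp
  have "idm C ?D = zer C ?D ?D" using bp(10) 1 2 add_zer[OF zer_hom[OF D D]] by simp
  then show ?thesis unfolding is_zero_obj_def using D by simp
qed

lemma zero_iso: "is_zero_obj C A \<Longrightarrow> is_zero_obj C B \<Longrightarrow> is_iso C (zer C A B)"
proof -
  assume a: "is_zero_obj C A" and b: "is_zero_obj C B"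
  have A: "A \<in> Ob C" and B: "B \<in> Ob C" using zero_ob a b by auto
  show ?thesis
    apply (rule iso_intro[OF zer_hom[OF A B] zer_hom[OF B A]])
    using comp_zer_l[OF zer_hom[OF A B] A] comp_zer_l[OF zer_hom[OF B A] B] a b unfolding is_zero_obj_def by auto
qed

lemma sh_zero: "is_zero_obj C Z \<Longrightarrow> is_zero_obj C (shO C Z)"
  unfolding is_zero_obj_def using sh_id sh_zer sh_ob by metis

lemma split_iso:
  assumes tr: "(a, b, zer C (cod C b) (shO C (dom C a))) \<in> tri C"
  shows "\<exists>p. p \<in> hom C (cod C a) (dsum C (dom C a) (cod C b)) \<and> is_iso C p"
proof -
  define A M B where "A = dom C a" "M = cod C a" "B = cod C b"
  note H = tri_homs[OF tr]
  have a: "a \<in> hom C A M" and b: "b \<in> hom C M B" using H A_M_B_def by auto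
  have A: "A \<in> Ob C" and M: "M \<in> Ob C" and B: "B \<in> Ob C" using hom_ob1[OF a] hom_ob2[OF a] hom_ob2[OF b] by auto
  have SA: "shO C A \<in> Ob C" using sh_ob[OF A] .
  have tr': "(a, b, zer C B (shO C A)) \<in> tri C" using tr A_M_B_def by simp
  have ba: "cmp C b a = zer C A B" using ZC[OF tr'] A_M_B_def by simp
  have R: "(b, zer C B (shO C A), mneg C (shM C a)) \<in> tri C" using rot[OF tr'] .
  have R2: "(zer C B (shO C A), mneg C (shM C a), mneg C (shM C b)) \<in> tri C" using rot[OF R] .
  have db: "dom C b = M" "cod C b = B" using hom_dom[OF b] hom_cod[OF b] .
  obtain s where s: "s \<in> hom C B M" "cmp C b s = idm C B"
  proof -
    have "\<exists>s \<in> hom C B (dom C b). cmp C b s = idm C B"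
      apply (rule COV[OF R])
      using id_hom[OF B] db zcod[OF B SA] id_r[OF zer_hom[OF B SA]] by auto
    then show ?thesis using that db by auto
  qed
  have mono: "\<And>T x. x \<in> hom C T A \<Longrightarrow> cmp C a x = zer C T M \<Longrightarrow> x = zer C T A"
  proof -
    fix T x assume x: "x \<in> hom C T A" and ax: "cmp C a x = zer C T M"
    have T: "T \<in> Ob C" using hom_ob1[OF x] .
    have sx: "shM C x \<in> hom C (shO C T) (shO C A)" using sh_hom[OF x] .
    have "cmp C (mneg C (shM C a)) (shM C x) = mneg C (shM C (cmp C a x))"
      using comp_neg_l[OF sx sh_hom[OF a]] sh_comp[OF x a] by simp
    also have "\<dots> = zer C (shO C T) (shO C M)" using ax sh_zer[OF T M] neg_zer[OF sh_ob[OF T] sh_ob[OF M]] by simp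
    finally have e: "cmp C (mneg C (shM C a)) (shM C x) = zer C (shO C T) (cod C (mneg C (shM C a)))"
      using hom_cod[OF neg_hom[OF sh_hom[OF a]]] by simp
    have "\<exists>s' \<in> hom C (shO C T) (dom C (zer C B (shO C A))). cmp C (zer C B (shO C A)) s' = shM C x"
      apply (rule COV[OF R2 _ e])
      using sx zcod[OF B SA] by simp
    then obtain s' where s': "s' \<in> hom C (shO C T) B" "cmp C (zer C B (shO C A)) s' = shM C x"
      using zdom[OF B SA] by auto
    have "shM C x = shM C (zer C T A)" using s' comp_zer_l[OF s'(1) SA] sh_zer[OF T A] by simp
    then show "x = zer C T A" using sh_faith[OF x zer_hom[OF T A]] by simp
  qed
  have sb: "cmp C s b \<in> hom C M M" using comp_hom[OF b s(1)] .
  define e0 where "e0 = madd C (idm C M) (mneg C (cmp C s b))"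
  have e0: "e0 \<in> hom C M M" unfolding e0_def using add_hom[OF id_hom[OF M] neg_hom[OF sb]] .
  have "cmp C b e0 = madd C (cmp C b (idm C M)) (cmp C b (mneg C (cmp C s b)))"
    unfolding e0_def using comp_add_r[OF id_hom[OF M] neg_hom[OF sb] b] .
  also have "\<dots> = madd C b (mneg C (cmp C (cmp C b s) b))"
    using id_r[OF b] comp_neg_r[OF sb b] assoc[OF b s(1) b] by simp
  also have "\<dots> = zer C M B" using s(2) id_l[OF b] add_neg[OF b] by simp
  finally have be0: "cmp C b e0 = zer C M (cod C b)" using db by simp
  obtain \<psi> where psi: "\<psi> \<in> hom C M A" "cmp C a \<psi> = e0"
  proof -
    have "\<exists>s \<in> hom C M (dom C a). cmp C a s = e0"
      apply (rule COV[OF tr' _ be0]) using e0 hom_cod[OF a] by simp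
    then show ?thesis using that A_M_B_def by auto
  qed
  have "cmp C a (cmp C \<psi> a) = cmp C e0 a" using assoc[OF a psi(1) a] psi(2) by simp
  also have "\<dots> = madd C (cmp C (idm C M) a) (cmp C (mneg C (cmp C s b)) a)"
    unfolding e0_def using comp_add_l[OF a id_hom[OF M] neg_hom[OF sb]] .
  also have "\<dots> = madd C a (mneg C (cmp C s (cmp C b a)))"
    using id_l[OF a] comp_neg_l[OF a sb] assoc[OF a b s(1)] by simp
  also have "\<dots> = a" using ba comp_zer_r[OF s(1) A] neg_zer[OF A M] add_zer[OF a] by simp
  finally have apa: "cmp C a (cmp C \<psi> a) = a" .
  have pa: "cmp C \<psi> a \<in> hom C A A" using comp_hom[OF a psi(1)] .
  have "cmp C a (madd C (cmp C \<psi> a) (mneg C (idm C A))) = madd C (cmp C a (cmp C \<psi> a)) (cmp C a (mneg C (idm C A)))"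
    using comp_add_r[OF pa neg_hom[OF id_hom[OF A]] a] .
  also have "\<dots> = zer C A M" using apa comp_neg_r[OF id_hom[OF A] a] id_r[OF a] add_neg[OF a] by simp
  finally have "madd C (cmp C \<psi> a) (mneg C (idm C A)) = zer C A A"
    using mono[OF add_hom[OF pa neg_hom[OF id_hom[OF A]]]] by simp
  then have psia: "cmp C \<psi> a = idm C A" using sub_zero[OF pa id_hom[OF A]] by simp
  have ps: "cmp C \<psi> s \<in> hom C B A" using comp_hom[OF s(1) psi(1)] .
  have "cmp C a (cmp C \<psi> s) = cmp C e0 s" using assoc[OF s(1) psi(1) a] psi(2) by simp
  also have "\<dots> = madd C (cmp C (idm C M) s) (cmp C (mneg C (cmp C s b)) s)"
    unfolding e0_def using comp_add_l[OF s(1) id_hom[OF M] neg_hom[OF sb]] .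
  also have "\<dots> = madd C s (mneg C (cmp C s (cmp C b s)))"
    using id_l[OF s(1)] comp_neg_l[OF s(1) sb] assoc[OF s(1) b s(1)] by simp
  also have "\<dots> = zer C B M" using s(2) id_r[OF s(1)] add_neg[OF s(1)] by simp
  finally have psis: "cmp C \<psi> s = zer C B A" using mono[OF ps] by simp
  note bp = bip[OF A B]
  define D where "D = dsum C A B"
  have i1: "in1 C A B \<in> hom C A D" and i2: "in2 C A B \<in> hom C B D"
    and p1: "pr1 C A B \<in> hom C D A" and p2: "pr2 C A B \<in> hom C D B" and D: "D \<in> Ob C"
    using bp D_def by auto
  define p where "p = madd C (cmp C (in1 C A B) \<psi>) (cmp C (in2 C A B) b)"
  define \<chi> where "\<chi> = madd C (cmp C a (pr1 C A B)) (cmp C s (pr2 C A B))"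
  have p: "p \<in> hom C M D" unfolding p_def using add_hom[OF comp_hom[OF psi(1) i1] comp_hom[OF b i2]] .
  have ch: "\<chi> \<in> hom C D M" unfolding \<chi>_def using add_hom[OF comp_hom[OF p1 a] comp_hom[OF p2 s(1)]] .
  have chi1: "cmp C \<chi> (in1 C A B) = a"
  proof -
    have "cmp C \<chi> (in1 C A B) = madd C (cmp C (cmp C a (pr1 C A B)) (in1 C A B)) (cmp C (cmp C s (pr2 C A B)) (in1 C A B))"
      unfolding \<chi>_def using comp_add_l[OF i1 comp_hom[OF p1 a] comp_hom[OF p2 s(1)]] .
    also have "\<dots> = madd C (cmp C a (cmp C (pr1 C A B) (in1 C A B))) (cmp C s (cmp C (pr2 C A B) (in1 C A B)))"
      using assoc2[OF i1 p1 a] assoc2[OF i1 p2 s(1)] by simp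
    also have "\<dots> = a" using bp(6) bp(8) id_r[OF a] comp_zer_r[OF s(1) A] add_zer[OF a] by simp
    finally show ?thesis .
  qed
  have chi2: "cmp C \<chi> (in2 C A B) = s"
  proof -
    have "cmp C \<chi> (in2 C A B) = madd C (cmp C (cmp C a (pr1 C A B)) (in2 C A B)) (cmp C (cmp C s (pr2 C A B)) (in2 C A B))"
      unfolding \<chi>_def using comp_add_l[OF i2 comp_hom[OF p1 a] comp_hom[OF p2 s(1)]] .
    also have "\<dots> = madd C (cmp C a (cmp C (pr1 C A B) (in2 C A B))) (cmp C s (cmp C (pr2 C A B) (in2 C A B)))"
      using assoc2[OF i2 p1 a] assoc2[OF i2 p2 s(1)] by simp
    also have "\<dots> = s" using bp(7) bp(9) id_r[OF s(1)] comp_zer_r[OF a B] zer_add[OF s(1)] by simp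
    finally show ?thesis .
  qed
  have pa1: "cmp C p a = in1 C A B"
  proof -
    have "cmp C p a = madd C (cmp C (cmp C (in1 C A B) \<psi>) a) (cmp C (cmp C (in2 C A B) b) a)"
      unfolding p_def using comp_add_l[OF a comp_hom[OF psi(1) i1] comp_hom[OF b i2]] .
    also have "\<dots> = madd C (cmp C (in1 C A B) (cmp C \<psi> a)) (cmp C (in2 C A B) (cmp C b a))"
      using assoc2[OF a psi(1) i1] assoc2[OF a b i2] by simp
    also have "\<dots> = in1 C A B" using psia ba id_r[OF i1] comp_zer_r[OF i2 A] add_zer[OF i1] by simp
    finally show ?thesis .
  qed
  have ps2: "cmp C p s = in2 C A B"
  proof -
    have "cmp C p s = madd C (cmp C (cmp C (in1 C A B) \<psi>) s) (cmp C (cmp C (in2 C A B) b) s)"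
      unfolding p_def using comp_add_l[OF s(1) comp_hom[OF psi(1) i1] comp_hom[OF b i2]] .
    also have "\<dots> = madd C (cmp C (in1 C A B) (cmp C \<psi> s)) (cmp C (in2 C A B) (cmp C b s))"
      using assoc2[OF s(1) psi(1) i1] assoc2[OF s(1) b i2] by simp
    also have "\<dots> = in2 C A B" using psis s(2) id_r[OF i2] comp_zer_r[OF i1 B] zer_add[OF i2] by simp
    finally show ?thesis .
  qed
  have "cmp C \<chi> p = madd C (cmp C \<chi> (cmp C (in1 C A B) \<psi>)) (cmp C \<chi> (cmp C (in2 C A B) b))"
    unfolding p_def using comp_add_r[OF comp_hom[OF psi(1) i1] comp_hom[OF b i2] ch] .
  also have "\<dots> = madd C (cmp C (cmp C \<chi> (in1 C A B)) \<psi>) (cmp C (cmp C \<chi> (in2 C A B)) b)"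
    using assoc[OF psi(1) i1 ch] assoc[OF b i2 ch] by simp
  also have "\<dots> = idm C M" using chi1 chi2 psi(2) e0_def sub_add[OF id_hom[OF M] sb] by simp
  finally have cp: "cmp C \<chi> p = idm C M" .
  have "cmp C p \<chi> = madd C (cmp C p (cmp C a (pr1 C A B))) (cmp C p (cmp C s (pr2 C A B)))"
    unfolding \<chi>_def using comp_add_r[OF comp_hom[OF p1 a] comp_hom[OF p2 s(1)] p] .
  also have "\<dots> = madd C (cmp C (cmp C p a) (pr1 C A B)) (cmp C (cmp C p s) (pr2 C A B))"
    using assoc[OF p1 a p] assoc[OF p2 s(1) p] by simp
  also have "\<dots> = idm C D" using pa1 ps2 bp(10) D_def by simp
  finally have pc: "cmp C p \<chi> = idm C D" .
  have "is_iso C p" using iso_intro[OF p ch cp pc] .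
  then show ?thesis using p A_M_B_def D_def by blast
qed

end

definition posq :: "enat \<Rightarrow> rd \<Rightarrow> bool" where
  "posq d x \<longleftrightarrow> (\<exists>\<phi>. rd_nonneg d \<phi> \<and> (\<forall>n. x n = \<phi> (n - 1) + \<phi> n))"

definition goodd :: "enat \<Rightarrow> bool" where
  "goodd d \<longleftrightarrow> d = \<infinity> \<or> (\<exists>m. d = enat m \<and> m > 0 \<and> odd m)"

lemma inRd_add: "in_Rd d a \<Longrightarrow> in_Rd d b \<Longrightarrow> in_Rd d (\<lambda>n. a n + b n)"
proof (cases d)
  case (enat m)
  assume "in_Rd d a" "in_Rd d b"
  then show ?thesis using enat unfolding in_Rd_def by simp
next
  case infinity
  assume a: "in_Rd d a" and b: "in_Rd d b"
  have "{n. a n + b n \<noteq> 0} \<subseteq> {n. a n \<noteq> 0} \<union> {n. b n \<noteq> 0}" by auto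
  moreover have "finite ({n. a n \<noteq> 0} \<union> {n. b n \<noteq> 0})" using a b infinity unfolding in_Rd_def by simp
  ultimately show ?thesis using infinity unfolding in_Rd_def by (simp add: finite_subset)
qed

lemma inRd_scale: "in_Rd d a \<Longrightarrow> in_Rd d (\<lambda>n. c * a n)"
proof (cases d)
  case (enat m)
  assume "in_Rd d a"
  then show ?thesis using enat unfolding in_Rd_def by simp
next
  case infinity
  assume a: "in_Rd d a"
  have "{n. c * a n \<noteq> 0} \<subseteq> {n. a n \<noteq> 0}" by auto
  then show ?thesis using a infinity unfolding in_Rd_def by (simp add: finite_subset)
qed

lemma inRd_shift: "in_Rd d a \<Longrightarrow> in_Rd d (\<lambda>n. a (n - 1))"
proof (cases d)
  case (enat m)
  assume a: "in_Rd d a"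
  have "\<forall>n. a (n - 1 + int m) = a (n - 1)" using a enat unfolding in_Rd_def by simp
  then have "\<forall>n. a (n + int m - 1) = a (n - 1)" by (simp add: algebra_simps)
  then show ?thesis using enat unfolding in_Rd_def by simp
next
  case infinity
  assume a: "in_Rd d a"
  have "{n. a (n - 1) \<noteq> 0} = (\<lambda>k. k + 1) ` {k. a k \<noteq> 0}"
    by (auto simp: image_iff) (rule_tac x="x - 1" in exI, simp)
  then show ?thesis using a infinity unfolding in_Rd_def by simp
qed

lemma inRd_sub: "in_Rd d a \<Longrightarrow> in_Rd d b \<Longrightarrow> in_Rd d (\<lambda>n. a n - b n)"
  using inRd_add[of d a "\<lambda>n. (-1) * b n"] inRd_scale[of d b "-1"] by simp

lemma inRd_zero: "in_Rd d (\<lambda>n. 0)"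
  by (cases d) (auto simp: in_Rd_def)

lemma inRd_cong: "in_Rd d a \<Longrightarrow> (\<And>n. b n = a n) \<Longrightarrow> in_Rd d b"
proof -
  assume "in_Rd d a" "\<And>n. b n = a n"
  then have "b = a" by auto
  then show ?thesis using \<open>in_Rd d a\<close> by simp
qed

lemma alt_pow:
  assumes h: "\<forall>n. x (n - 1) + x n = (0::real)"
  shows "x (n + int k) = (-1) ^ k * x n"
proof (induction k)
  case 0 then show ?case by simp
next
  case (Suc k)
  have "x (n + int k) + x (n + int (Suc k)) = 0" using h[rule_format, of "n + int (Suc k)"] by simp
  then show ?case using Suc by simp
qed

lemma q1_inj:
  assumes g: "goodd d" and x: "in_Rd d x" and h: "\<forall>n. x (n - 1) + x n = 0"
  shows "x n = 0"
proof (cases d)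
  case infinity
  show ?thesis
  proof (rule ccontr)
    assume nz: "x n \<noteq> 0"
    have "range (\<lambda>k::nat. n + int k) \<subseteq> {n. x n \<noteq> 0}" using alt_pow[OF h] nz by auto
    moreover have "inj (\<lambda>k::nat. n + int k)" by (auto simp: inj_def)
    have fin: "finite {n. x n \<noteq> 0}" using x infinity unfolding in_Rd_def by simp
    have "finite (range (\<lambda>k::nat. n + int k))" using finite_subset[OF \<open>range _ \<subseteq> _\<close> fin] .
    then have "finite (UNIV :: nat set)" using finite_imageD[OF _ \<open>inj _\<close>] by blast
    then show False by simp
  qed
next
  case (enat m)
  then have m: "m > 0" "odd m" using g unfolding goodd_def by auto
  have "x (n + int m) = x n" using x enat unfolding in_Rd_def by simp
  moreover have "x (n + int m) = - x n" using alt_pow[OF h, of n m] m by simp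
  ultimately show ?thesis by simp
qed

lemma q1_eq:
  assumes g: "goodd d" and x: "in_Rd d x" and y: "in_Rd d y" and h: "\<And>n. x (n - 1) + x n = y (n - 1) + y n"
  shows "x = y"
proof
  fix n
  have s: "in_Rd d (\<lambda>n. x n - y n)" using inRd_sub[OF x y] .
  have "\<forall>n. (x (n - 1) - y (n - 1)) + (x n - y n) = 0"
  proof
    fix n show "(x (n - 1) - y (n - 1)) + (x n - y n) = 0" using h[of n] by linarith
  qed
  then have "\<forall>n. (\<lambda>n. x n - y n) (n - 1) + (\<lambda>n. x n - y n) n = 0" by simp
  from q1_inj[OF g s this] have "x n - y n = 0" by simp
  then show "x n = y n" by simp
qed

lemma posq_div:
  assumes g: "goodd d" and p: "posq d x" and y: "in_Rd d y" and h: "\<And>n. x n = y (n - 1) + y n"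
  shows "y n \<ge> 0"
proof -
  obtain \<phi> where phi: "rd_nonneg d \<phi>" "\<forall>n. x n = \<phi> (n - 1) + \<phi> n" using p unfolding posq_def by blast
  have e: "\<And>n. y (n - 1) + y n = \<phi> (n - 1) + \<phi> n"
  proof -
    fix n show "y (n - 1) + y n = \<phi> (n - 1) + \<phi> n" using h[of n] phi(2) by simp
  qed
  have pin: "in_Rd d \<phi>" using phi(1) unfolding rd_nonneg_def by simp
  have "y = \<phi>" using q1_eq[OF g y pin e] .
  then show ?thesis using phi unfolding rd_nonneg_def by simp
qed

lemma posq_antisym:
  assumes g: "goodd d" and p: "posq d x" and p2: "posq d (\<lambda>n. - x n)"
  shows "x n = 0"
proof -
  obtain \<phi> where phi: "rd_nonneg d \<phi>" "\<forall>n. x n = \<phi> (n - 1) + \<phi> n" using p unfolding posq_def by blast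
  obtain \<psi> where psi: "rd_nonneg d \<psi>" "\<forall>n. - x n = \<psi> (n - 1) + \<psi> n" using p2 unfolding posq_def by blast
  have s: "in_Rd d (\<lambda>n. \<phi> n + \<psi> n)" using inRd_add phi(1) psi(1) unfolding rd_nonneg_def by blast
  have "\<forall>n. (\<phi> (n - 1) + \<psi> (n - 1)) + (\<phi> n + \<psi> n) = 0"
  proof
    fix n
    have "x n = \<phi> (n - 1) + \<phi> n" "- x n = \<psi> (n - 1) + \<psi> n" using phi(2) psi(2) by auto
    then show "(\<phi> (n - 1) + \<psi> (n - 1)) + (\<phi> n + \<psi> n) = 0" by linarith
  qed
  then have z: "\<And>k. \<phi> k + \<psi> k = 0" using q1_inj[OF g s] by blast
  have "\<And>k. \<phi> k = 0"
  proof -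
    fix k
    have "\<phi> k \<ge> 0" "\<psi> k \<ge> 0" using phi(1) psi(1) unfolding rd_nonneg_def by auto
    then show "\<phi> k = 0" using z[of k] by linarith
  qed
  then show ?thesis using phi(2) by simp
qed

lemma posq_cong: "posq d x \<Longrightarrow> (\<And>n. y n = x n) \<Longrightarrow> posq d y"
  unfolding posq_def by simp

locale rk = tc +
  fixes d :: enat and \<rho> :: "'a \<Rightarrow> rd"
  assumes dd: "d = \<infinity> \<or> (\<exists>m. d = enat m \<and> m > 0 \<and> odd m)"
    and \<rho>R: "\<forall>X \<in> Ob C. in_Rd d (\<rho> X)"
    and ax_a: "\<forall>X \<in> Ob C. \<rho> (shO C X) = rd_q (\<rho> X)"
    and ax_b: "\<forall>X \<in> Ob C. \<forall>Y \<in> Ob C. \<rho> (dsum C X Y) = rd_add (\<rho> X) (\<rho> Y)"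
    and ax_c: "\<forall>(f, g, h) \<in> tri C. \<exists>\<phi>. rd_nonneg d \<phi> \<and>
              rd_add (rd_sub (\<rho> (dom C f)) (\<rho> (cod C f))) (\<rho> (cod C g)) = rd_q1 \<phi>"
begin

lemma good: "goodd d" using dd unfolding goodd_def .

lemma rin: "X \<in> Ob C \<Longrightarrow> in_Rd d (\<rho> X)" using \<rho>R by blast
lemma rsh: "X \<in> Ob C \<Longrightarrow> \<rho> (shO C X) n = \<rho> X (n - 1)"
  using ax_a unfolding rd_q_def by simp
lemma rsum: "X \<in> Ob C \<Longrightarrow> Y \<in> Ob C \<Longrightarrow> \<rho> (dsum C X Y) n = \<rho> X n + \<rho> Y n"
  using ax_b unfolding rd_add_def by simp

lemma tpos: "(f, g, h) \<in> tri C \<Longrightarrow> posq d (\<lambda>n. \<rho> (dom C f) n - \<rho> (cod C f) n + \<rho> (cod C g) n)"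
proof -
  assume t: "(f, g, h) \<in> tri C"
  obtain \<phi> where phi: "rd_nonneg d \<phi>" "rd_add (rd_sub (\<rho> (dom C f)) (\<rho> (cod C f))) (\<rho> (cod C g)) = rd_q1 \<phi>"
    using ax_c t by blast
  have "\<forall>n. \<rho> (dom C f) n - \<rho> (cod C f) n + \<rho> (cod C g) n = \<phi> (n - 1) + \<phi> n"
  proof
    fix n
    have "rd_add (rd_sub (\<rho> (dom C f)) (\<rho> (cod C f))) (\<rho> (cod C g)) n = rd_q1 \<phi> n" using phi(2) by simp
    then show "\<rho> (dom C f) n - \<rho> (cod C f) n + \<rho> (cod C g) n = \<phi> (n - 1) + \<phi> n"
      unfolding rd_add_def rd_sub_def rd_q1_def rd_q_def by simp
  qed
  then show ?thesis unfolding posq_def using phi(1) by blast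
qed

lemma R0: assumes z: "is_zero_obj C Z" shows "\<rho> Z n = 0"
proof -
  have Z: "Z \<in> Ob C" using zero_ob[OF z] .
  define D2 where "D2 = dsum C Z Z"
  define D3 where "D3 = dsum C Z D2"
  have z2: "is_zero_obj C D2" unfolding D2_def using dsum_zero[OF z z] .
  have z3: "is_zero_obj C D3" unfolding D3_def using dsum_zero[OF z z2] .
  have D2: "D2 \<in> Ob C" and D3: "D3 \<in> Ob C" using zero_ob z2 z3 by auto
  have t: "(zer C Z D3, zer C D3 Z, zer C Z (shO C Z)) \<in> tri C"
    using iso_tri[OF zer_hom[OF Z D3] zero_iso[OF z z3] z] .
  have p1: "posq d (\<lambda>n. \<rho> Z n - \<rho> D3 n + \<rho> Z n)"
    using tpos[OF t] zdom[OF Z D3] zcod[OF Z D3] zcod[OF D3 Z] by simp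
  have "\<And>n. \<rho> D3 n = \<rho> Z n + (\<rho> Z n + \<rho> Z n)" unfolding D3_def D2_def using rsum Z D2 D2_def by simp
  then have p1': "posq d (\<lambda>n. - \<rho> Z n)" using posq_cong[OF p1] by simp
  have t2: "(idm C Z, zer C Z Z, zer C Z (shO C Z)) \<in> tri C" using tr1[OF Z z] .
  have p2: "posq d (\<lambda>n. \<rho> Z n - \<rho> Z n + \<rho> Z n)"
    using tpos[OF t2] hom_dom[OF id_hom[OF Z]] hom_cod[OF id_hom[OF Z]] zcod[OF Z Z] by simp
  have p2': "posq d (\<rho> Z)" using posq_cong[OF p2] by simp
  show ?thesis using posq_antisym[OF good p2' p1'] .
qed

lemma ISO: assumes e: "e \<in> hom C M N" and i: "is_iso C e" shows "\<rho> M = \<rho> N"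
proof
  fix n
  obtain Z0 where z: "is_zero_obj C Z0" using zero_ex by blast
  obtain e' where e': "e' \<in> hom C N M" "is_iso C e'" using iso_inv[OF i e] by blast
  have "posq d (\<lambda>n. \<rho> M n - \<rho> N n + \<rho> Z0 n)"
    using tpos[OF iso_tri[OF e i z]] hom_dom[OF e] hom_cod[OF e] zcod[OF hom_ob2[OF e] zero_ob[OF z]] by simp
  then have p1: "posq d (\<lambda>n. \<rho> M n - \<rho> N n)" using posq_cong R0[OF z] by simp
  have "posq d (\<lambda>n. \<rho> N n - \<rho> M n + \<rho> Z0 n)"
    using tpos[OF iso_tri[OF e'(1) e'(2) z]] hom_dom[OF e'(1)] hom_cod[OF e'(1)] zcod[OF hom_ob2[OF e'(1)] zero_ob[OF z]] by simp
  then have p2: "posq d (\<lambda>n. - (\<rho> M n - \<rho> N n))" using posq_cong R0[OF z] by simp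
  have "\<rho> M n - \<rho> N n = 0" using posq_antisym[OF good p1 p2] .
  then show "\<rho> M n = \<rho> N n" by simp
qed

lemma OCT:
  assumes f: "f \<in> hom C X Y" and g: "g \<in> hom C Y Z"
    and t1: "(f, u, w) \<in> tri C" and t2: "(g, v, j) \<in> tri C" and t3: "(cmp C g f, v', w') \<in> tri C"
  shows "posq d (\<lambda>n. \<rho> (cod C u) n - \<rho> (cod C v') n + \<rho> (cod C v) n)"
proof -
  have fm: "f \<in> Mor C" "g \<in> Mor C" "cod C f = dom C g" using f g by (auto simp: hom_iff)
  obtain a b where ab: "(a, b, cmp C (shM C u) j) \<in> tri C" "cmp C a u = cmp C v' g" "cmp C w' a = w"
     "cmp C b v' = v" "cmp C j b = cmp C (shM C f) w'"
    using tr4[OF fm t1 t2 t3] by blast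
  note H1 = tri_homs[OF t1] and H2 = tri_homs[OF t2] and H3 = tri_homs[OF t3] and H = tri_homs[OF ab(1)]
  have df: "dom C f = X" "cod C f = Y" "dom C g = Y" "cod C g = Z" using f g by (auto simp: hom_iff)
  have gf: "cmp C g f \<in> hom C X Z" using comp_hom[OF f g] .
  have dgf: "dom C (cmp C g f) = X" "cod C (cmp C g f) = Z" using hom_dom[OF gf] hom_cod[OF gf] by auto
  have u: "u \<in> hom C Y (cod C u)" and w: "w \<in> hom C (cod C u) (shO C X)" using H1 df by auto
  have j: "j \<in> hom C (cod C v) (shO C Y)" using H2 df by auto
  have v': "v' \<in> hom C Z (cod C v')" and w': "w' \<in> hom C (cod C v') (shO C X)" using H3 dgf by auto
  have k: "cmp C (shM C u) j \<in> hom C (cod C v) (shO C (cod C u))" using comp_hom[OF j sh_hom[OF u]] .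
  have cb: "cod C b = cod C v" using H(3) hom_dom[OF k] hom_dom[OF H(3)] by simp
  have b: "b \<in> hom C (cod C a) (cod C v)" using H(2) cb by simp
  have "dom C (cmp C j b) = cod C a" using hom_dom[OF comp_hom[OF b j]] .
  moreover have "dom C (cmp C (shM C f) w') = cod C v'" using hom_dom[OF comp_hom[OF w' sh_hom[OF f]]] .
  ultimately have ca: "cod C a = cod C v'" using ab(5) by simp
  have a: "a \<in> hom C (dom C a) (cod C v')" using H(1) ca by simp
  have "dom C (cmp C w' a) = dom C a" using hom_dom[OF comp_hom[OF a w']] .
  then have da: "dom C a = cod C u" using ab(3) hom_dom[OF w] by simp
  show ?thesis using tpos[OF ab(1)] da ca cb by simp
qed

lemma R1:
  assumes t1: "(f, g, h) \<in> tri C" and t2: "(f, g', h') \<in> tri C"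
  shows "\<rho> (cod C g) = \<rho> (cod C g')"
proof
  fix n
  obtain Z0 where z: "is_zero_obj C Z0" using zero_ex by blast
  note H = tri_homs[OF t1]
  define X Y where "X = dom C f" "Y = cod C f"
  have f: "f \<in> hom C X Y" using H X_Y_def by simp
  have Y: "Y \<in> Ob C" using hom_ob2[OF f] .
  have ti: "(idm C Y, zer C Y Z0, zer C Z0 (shO C Y)) \<in> tri C" using tr1[OF Y z] .
  have e: "cmp C (idm C Y) f = f" using id_l[OF f] .
  have c0: "cod C (zer C Y Z0) = Z0" using zcod[OF Y zero_ob[OF z]] .
  have "posq d (\<lambda>n. \<rho> (cod C g) n - \<rho> (cod C g') n + \<rho> Z0 n)"
    using OCT[OF f id_hom[OF Y] t1 ti] t2 e c0 by simp
  then have p1: "posq d (\<lambda>n. \<rho> (cod C g) n - \<rho> (cod C g') n)" using posq_cong R0[OF z] by simp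
  have "posq d (\<lambda>n. \<rho> (cod C g') n - \<rho> (cod C g) n + \<rho> Z0 n)"
    using OCT[OF f id_hom[OF Y] t2 ti] t1 e c0 by simp
  then have p2: "posq d (\<lambda>n. - (\<rho> (cod C g) n - \<rho> (cod C g') n))" using posq_cong R0[OF z] by simp
  show "\<rho> (cod C g) n = \<rho> (cod C g') n" using posq_antisym[OF good p1 p2] by simp
qed

lemma SPLITR:
  assumes tr: "(a, b, zer C (cod C b) (shO C (dom C a))) \<in> tri C"
  shows "\<rho> (cod C a) n = \<rho> (dom C a) n + \<rho> (cod C b) n"
proof -
  obtain p where p: "p \<in> hom C (cod C a) (dsum C (dom C a) (cod C b))" "is_iso C p" using split_iso[OF tr] by blast
  note H = tri_homs[OF tr]
  have "\<rho> (cod C a) = \<rho> (dsum C (dom C a) (cod C b))" using ISO[OF p] .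
  then show ?thesis using rsum[OF hom_ob1[OF H(1)] hom_ob2[OF H(2)]] by simp
qed

end

context rk begin

abbreviation rr where "rr \<equiv> rk_of C d \<rho>"

lemma some_tri: "f \<in> Mor C \<Longrightarrow> \<exists>g h. (f, g, h) \<in> tri C \<and> cone C f = cod C g"
proof -
  assume f: "f \<in> Mor C"
  obtain g h where "(f, g, h) \<in> tri C" using tr1_ex[OF f] by blast
  then have "\<exists>gh. (f, fst gh, snd gh) \<in> tri C" by (intro exI[of _ "(g, h)"]) simp
  then have "(f, fst (SOME gh. (f, fst gh, snd gh) \<in> tri C), snd (SOME gh. (f, fst gh, snd gh) \<in> tri C)) \<in> tri C"
    by (rule someI_ex)
  then show ?thesis unfolding cone_def by blast
qed

lemma rk_ex: "f \<in> Mor C \<Longrightarrow> \<exists>\<phi>. rd_nonneg d \<phi> \<and> rd_q1 \<phi> = rk_num C \<rho> f"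
proof -
  assume f: "f \<in> Mor C"
  obtain g h where t: "(f, g, h) \<in> tri C" and cg: "cone C f = cod C g" using some_tri[OF f] by blast
  have R: "(g, h, mneg C (shM C f)) \<in> tri C" using rot[OF t] .
  note H = tri_homs[OF t]
  have X: "dom C f \<in> Ob C" using hom_ob1[OF H(1)] .
  obtain \<phi> where phi: "rd_nonneg d \<phi>" "rd_add (rd_sub (\<rho> (dom C g)) (\<rho> (cod C g))) (\<rho> (cod C h)) = rd_q1 \<phi>"
    using ax_c R by blast
  have "dom C g = cod C f" "cod C h = shO C (dom C f)" using hom_dom[OF H(2)] hom_cod[OF H(3)] by auto
  then have "rd_q1 \<phi> = rk_num C \<rho> f" using phi(2) cg ax_a X unfolding rk_num_def by simp
  then show ?thesis using phi(1) by blast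
qed

lemma rk_uniq: "in_Rd d x \<Longrightarrow> in_Rd d y \<Longrightarrow> rd_q1 x = rd_q1 y \<Longrightarrow> x = y"
proof -
  assume x: "in_Rd d x" and y: "in_Rd d y" and e: "rd_q1 x = rd_q1 y"
  have "\<And>n. x (n - 1) + x n = y (n - 1) + y n"
  proof -
    fix n have "rd_q1 x n = rd_q1 y n" using e by simp
    then show "x (n - 1) + x n = y (n - 1) + y n" unfolding rd_q1_def rd_add_def rd_q_def by simp
  qed
  then show ?thesis using q1_eq[OF good x y] by blast
qed

lemma rk_ex1: "f \<in> Mor C \<Longrightarrow> \<exists>!r. in_Rd d r \<and> rd_q1 r = rk_num C \<rho> f"
proof -
  assume f: "f \<in> Mor C"
  obtain \<phi> where phi: "rd_nonneg d \<phi>" "rd_q1 \<phi> = rk_num C \<rho> f" using rk_ex[OF f] by blast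
  show ?thesis
  proof (rule ex1I[of _ \<phi>])
    show "in_Rd d \<phi> \<and> rd_q1 \<phi> = rk_num C \<rho> f" using phi unfolding rd_nonneg_def by simp
  next
    fix y assume "in_Rd d y \<and> rd_q1 y = rk_num C \<rho> f"
    then show "y = \<phi>" using rk_uniq[of y \<phi>] phi unfolding rd_nonneg_def by simp
  qed
qed

lemma rk_prop: "f \<in> Mor C \<Longrightarrow> rd_nonneg d (rr f) \<and> rd_q1 (rr f) = rk_num C \<rho> f"
proof -
  assume f: "f \<in> Mor C"
  obtain \<phi> where phi: "rd_nonneg d \<phi>" "rd_q1 \<phi> = rk_num C \<rho> f" using rk_ex[OF f] by blast
  have "rr f = \<phi>" unfolding rk_of_def
  proof (rule the1_equality[OF rk_ex1[OF f]])
    show "in_Rd d \<phi> \<and> rd_q1 \<phi> = rk_num C \<rho> f" using phi unfolding rd_nonneg_def by simp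
  qed
  then show ?thesis using phi by simp
qed

lemma rk_in: "f \<in> Mor C \<Longrightarrow> in_Rd d (rr f)" using rk_prop unfolding rd_nonneg_def by blast
lemma rk_nn: "f \<in> Mor C \<Longrightarrow> rr f n \<ge> 0" using rk_prop unfolding rd_nonneg_def by blast

lemma RKT: assumes t: "(f, g, h) \<in> tri C"
  shows "rr f (n - 1) + rr f n = \<rho> (cod C f) n - \<rho> (cod C g) n + \<rho> (dom C f) (n - 1)"
proof -
  note H = tri_homs[OF t]
  have f: "f \<in> Mor C" using hom_mor[OF H(1)] .
  obtain g0 h0 where t0: "(f, g0, h0) \<in> tri C" and cg: "cone C f = cod C g0" using some_tri[OF f] by blast
  have "rd_q1 (rr f) n = rk_num C \<rho> f n" using rk_prop[OF f] by simp
  then have "rr f (n - 1) + rr f n = \<rho> (cod C f) n - \<rho> (cone C f) n + \<rho> (dom C f) (n - 1)"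
    unfolding rd_q1_def rk_num_def rd_add_def rd_sub_def rd_q_def by simp
  then show ?thesis using cg R1[OF t0 t] by simp
qed

lemma rk_eqI: "f \<in> Mor C \<Longrightarrow> in_Rd d y \<Longrightarrow> (\<And>n. rr f (n - 1) + rr f n = y (n - 1) + y n) \<Longrightarrow> rr f = y"
  using q1_eq[OF good rk_in] by blast

lemma tri_sum: assumes t: "(f, g, h) \<in> tri C" shows "rr f n + rr g n = \<rho> (cod C f) n"
proof -
  note H = tri_homs[OF t]
  have X: "dom C f \<in> Ob C" using hom_ob1[OF H(1)] .
  have R: "(g, h, mneg C (shM C f)) \<in> tri C" using rot[OF t] .
  have ch: "cod C h = shO C (dom C f)" using hom_cod[OF H(3)] .
  have dg: "dom C g = cod C f" using hom_dom[OF H(2)] .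
  have s: "in_Rd d (\<lambda>n. rr f n + rr g n)" using inRd_add rk_in hom_mor H by blast
  have "\<And>n. (rr f (n - 1) + rr g (n - 1)) + (rr f n + rr g n) = \<rho> (cod C f) (n - 1) + \<rho> (cod C f) n"
  proof -
    fix n
    have 1: "rr f (n - 1) + rr f n = \<rho> (cod C f) n - \<rho> (cod C g) n + \<rho> (dom C f) (n - 1)" using RKT[OF t] .
    have 2: "rr g (n - 1) + rr g n = \<rho> (cod C g) n - \<rho> (cod C h) n + \<rho> (dom C g) (n - 1)" using RKT[OF R] .
    have 3: "\<rho> (cod C h) n = \<rho> (dom C f) (n - 1)" using ch rsh[OF X] by simp
    show "(rr f (n - 1) + rr g (n - 1)) + (rr f n + rr g n) = \<rho> (cod C f) (n - 1) + \<rho> (cod C f) n"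
      using 1 2 3 dg by simp
  qed
  then have "(\<lambda>n. rr f n + rr g n) = \<rho> (cod C f)" using q1_eq[OF good s rin[OF hom_ob2[OF H(1)]]] by simp
  then show ?thesis by (metis)
qed

lemma rk_id: assumes Y: "Y \<in> Ob C" shows "rr (idm C Y) = \<rho> Y"
proof -
  obtain Z0 where z: "is_zero_obj C Z0" using zero_ex by blast
  have t: "(idm C Y, zer C Y Z0, zer C Z0 (shO C Y)) \<in> tri C" using tr1[OF Y z] .
  show ?thesis
  proof (rule rk_eqI[OF hom_mor[OF id_hom[OF Y]] rin[OF Y]])
    fix n show "rr (idm C Y) (n - 1) + rr (idm C Y) n = \<rho> Y (n - 1) + \<rho> Y n"
      using RKT[OF t, of n] hom_dom[OF id_hom[OF Y]] hom_cod[OF id_hom[OF Y]] zcod[OF Y zero_ob[OF z]] R0[OF z] by simp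
  qed
qed

lemma SYL:
  assumes f: "f \<in> hom C X Y" and g: "g \<in> hom C Y Z"
  shows "rr (cmp C g f) n \<ge> rr f n + rr g n - \<rho> Y n"
proof -
  have gf: "cmp C g f \<in> hom C X Z" using comp_hom[OF f g] .
  obtain u w where t1: "(f, u, w) \<in> tri C" using tr1_ex[OF hom_mor[OF f]] by blast
  obtain v j where t2: "(g, v, j) \<in> tri C" using tr1_ex[OF hom_mor[OF g]] by blast
  obtain v' w' where t3: "(cmp C g f, v', w') \<in> tri C" using tr1_ex[OF hom_mor[OF gf]] by blast
  have p: "posq d (\<lambda>n. \<rho> (cod C u) n - \<rho> (cod C v') n + \<rho> (cod C v) n)" using OCT[OF f g t1 t2 t3] .
  define s where "s = (\<lambda>n. \<rho> Y n - rr f n - rr g n + rr (cmp C g f) n)"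
  have sin: "in_Rd d s" unfolding s_def
    using inRd_add[OF inRd_sub[OF inRd_sub[OF rin[OF hom_ob2[OF f]] rk_in[OF hom_mor[OF f]]] rk_in[OF hom_mor[OF g]]] rk_in[OF hom_mor[OF gf]]] .
  have df: "dom C f = X" "cod C f = Y" "dom C g = Y" "cod C g = Z" "dom C (cmp C g f) = X" "cod C (cmp C g f) = Z"
    using f g gf by (auto simp: hom_iff)
  have "\<And>n. (\<lambda>n. \<rho> (cod C u) n - \<rho> (cod C v') n + \<rho> (cod C v) n) n = s (n - 1) + s n"
  proof -
    fix n
    have 1: "rr f (n - 1) + rr f n = \<rho> Y n - \<rho> (cod C u) n + \<rho> X (n - 1)" using RKT[OF t1, of n] df by simp
    have 2: "rr g (n - 1) + rr g n = \<rho> Z n - \<rho> (cod C v) n + \<rho> Y (n - 1)" using RKT[OF t2, of n] df by simp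
    have 3: "rr (cmp C g f) (n - 1) + rr (cmp C g f) n = \<rho> Z n - \<rho> (cod C v') n + \<rho> X (n - 1)" using RKT[OF t3, of n] df by simp
    show "(\<lambda>n. \<rho> (cod C u) n - \<rho> (cod C v') n + \<rho> (cod C v) n) n = s (n - 1) + s n"
      unfolding s_def using 1 2 3 by simp
  qed
  then have "s n \<ge> 0" using posq_div[OF good p sin] by blast
  then show ?thesis unfolding s_def by simp
qed

lemma RISO:
  assumes k: "k \<in> hom C X Y" and e: "e \<in> hom C Y Y'" and i: "is_iso C e"
  shows "rr (cmp C e k) = rr k"
proof -
  obtain Z0 where z: "is_zero_obj C Z0" using zero_ex by blast
  obtain e' where e': "e' \<in> hom C Y' Y" "is_iso C e'" "cmp C e' e = idm C Y" using iso_inv[OF i e] by blast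
  have ek: "cmp C e k \<in> hom C X Y'" using comp_hom[OF k e] .
  obtain u w where t1: "(k, u, w) \<in> tri C" using tr1_ex[OF hom_mor[OF k]] by blast
  obtain u' w' where t2: "(cmp C e k, u', w') \<in> tri C" using tr1_ex[OF hom_mor[OF ek]] by blast
  have te: "(e, zer C Y' Z0, zer C Z0 (shO C Y)) \<in> tri C" using iso_tri[OF e i z] .
  have te': "(e', zer C Y Z0, zer C Z0 (shO C Y')) \<in> tri C" using iso_tri[OF e'(1) e'(2) z] .
  have Z0: "Z0 \<in> Ob C" using zero_ob[OF z] .
  have kk: "cmp C e' (cmp C e k) = k" using assoc[OF k e e'(1)] e'(3) id_l[OF k] by simp
  have "posq d (\<lambda>n. \<rho> (cod C u) n - \<rho> (cod C u') n + \<rho> (cod C (zer C Y' Z0)) n)"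
    using OCT[OF k e t1 te t2] .
  then have p1: "posq d (\<lambda>n. \<rho> (cod C u) n - \<rho> (cod C u') n)"
    using posq_cong zcod[OF hom_ob2[OF e] Z0] R0[OF z] by simp
  have "posq d (\<lambda>n. \<rho> (cod C u') n - \<rho> (cod C u) n + \<rho> (cod C (zer C Y Z0)) n)"
    using OCT[OF ek e'(1) t2 te'] t1 kk by simp
  then have p2: "posq d (\<lambda>n. - (\<rho> (cod C u) n - \<rho> (cod C u') n))"
    using posq_cong zcod[OF hom_ob1[OF e] Z0] R0[OF z] by simp
  have cu: "\<And>n. \<rho> (cod C u) n = \<rho> (cod C u') n" using posq_antisym[OF good p1 p2] by simp
  have YY: "\<rho> Y = \<rho> Y'" using ISO[OF e i] .
  show ?thesis
  proof (rule rk_eqI[OF hom_mor[OF ek] rk_in[OF hom_mor[OF k]]])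
    fix n
    show "rr (cmp C e k) (n - 1) + rr (cmp C e k) n = rr k (n - 1) + rr k n"
      using RKT[OF t1, of n] RKT[OF t2, of n] cu YY hom_dom[OF k] hom_cod[OF k] hom_dom[OF ek] hom_cod[OF ek] by simp
  qed
qed

lemma rk_negsh: assumes f: "f \<in> Mor C" shows "rr (mneg C (shM C f)) n = rr f (n - 1)"
proof -
  obtain g h where t: "(f, g, h) \<in> tri C" using tr1_ex[OF f] by blast
  have t3: "(mneg C (shM C f), mneg C (shM C g), mneg C (shM C h)) \<in> tri C" using rot[OF rot[OF rot[OF t]]] .
  note H = tri_homs[OF t]
  define X Y Z where "X = dom C f" "Y = cod C f" "Z = cod C g"
  have X: "X \<in> Ob C" "Y \<in> Ob C" "Z \<in> Ob C" using hom_ob1[OF H(1)] hom_ob2[OF H(1)] hom_ob2[OF H(2)] X_Y_Z_def by auto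
  have n1: "mneg C (shM C f) \<in> hom C (shO C X) (shO C Y)" using neg_hom[OF sh_hom[OF H(1)]] X_Y_Z_def by simp
  have n2: "mneg C (shM C g) \<in> hom C (shO C Y) (shO C Z)" using neg_hom[OF sh_hom[OF H(2)]] X_Y_Z_def by simp
  have "rr (mneg C (shM C f)) = (\<lambda>n. rr f (n - 1))"
  proof (rule rk_eqI[OF hom_mor[OF n1] inRd_shift[OF rk_in[OF f]]])
    fix n
    have 1: "rr f (n - 1 - 1) + rr f (n - 1) = \<rho> Y (n - 1) - \<rho> Z (n - 1) + \<rho> X (n - 1 - 1)"
      using RKT[OF t, of "n - 1"] X_Y_Z_def by simp
    show "rr (mneg C (shM C f)) (n - 1) + rr (mneg C (shM C f)) n = rr f (n - 1 - 1) + rr f (n - 1)"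
      using RKT[OF t3, of n] 1 hom_dom[OF n1] hom_cod[OF n1] hom_cod[OF n2] rsh X by simp
  qed
  then show ?thesis by simp
qed

lemma rk_sh: assumes f: "f \<in> Mor C" shows "rr (shM C f) n = rr f (n - 1)"
proof -
  define X Y where "X = dom C f" "Y = cod C f"
  have f': "f \<in> hom C X Y" using mor_hom[OF f] X_Y_def by simp
  have sf: "shM C f \<in> hom C (shO C X) (shO C Y)" using sh_hom[OF f'] .
  have SY: "shO C Y \<in> Ob C" using hom_ob2[OF sf] .
  have ni: "mneg C (idm C (shO C Y)) \<in> hom C (shO C Y) (shO C Y)" using neg_hom[OF id_hom[OF SY]] .
  have "cmp C (mneg C (idm C (shO C Y))) (mneg C (idm C (shO C Y))) = idm C (shO C Y)"
    using comp_neg_l[OF ni id_hom[OF SY]] id_l[OF ni] neg_neg[OF id_hom[OF SY]] by simp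
  then have iso: "is_iso C (mneg C (idm C (shO C Y)))" using iso_intro[OF ni ni] by blast
  have "cmp C (mneg C (idm C (shO C Y))) (shM C f) = mneg C (shM C f)"
    using comp_neg_l[OF sf id_hom[OF SY]] id_l[OF sf] by simp
  then have "rr (mneg C (shM C f)) = rr (shM C f)" using RISO[OF sf ni iso] by simp
  then show ?thesis using rk_negsh[OF f] by metis
qed

lemma rk_zer: assumes X: "X \<in> Ob C" and W: "W \<in> Ob C" shows "rr (zer C X W) n = 0"
proof -
  have z: "zer C X W \<in> hom C X W" using zer_hom[OF X W] .
  obtain u w where t: "(zer C X W, u, w) \<in> tri C" using tr1_ex[OF hom_mor[OF z]] by blast
  note H = tri_homs[OF t]
  have R: "(u, w, mneg C (shM C (zer C X W))) \<in> tri C" using rot[OF t] .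
  have du: "dom C u = W" using hom_dom[OF H(2)] hom_cod[OF z] by simp
  have cw: "cod C w = shO C X" using hom_cod[OF H(3)] hom_dom[OF z] by simp
  have "mneg C (shM C (zer C X W)) = zer C (cod C w) (shO C (dom C u))"
    using sh_zer[OF X W] neg_zer[OF sh_ob[OF X] sh_ob[OF W]] du cw by simp
  then have R': "(u, w, zer C (cod C w) (shO C (dom C u))) \<in> tri C" using R by simp
  have sp: "\<And>n. \<rho> (cod C u) n = \<rho> W n + \<rho> X (n - 1)" using SPLITR[OF R'] du cw rsh[OF X] by simp
  have "rr (zer C X W) = (\<lambda>n. 0)"
  proof (rule rk_eqI[OF hom_mor[OF z] inRd_zero])
    fix n show "rr (zer C X W) (n - 1) + rr (zer C X W) n = 0 + 0"
      using RKT[OF t, of n] sp hom_dom[OF z] hom_cod[OF z] by simp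
  qed
  then show ?thesis by simp
qed

lemma CM1:
  assumes f: "f \<in> hom C X Y" and g: "g \<in> hom C Y Z"
  shows "rr (cmp C g f) n \<le> rr g n"
proof -
  obtain v j where t: "(g, v, j) \<in> tri C" using tr1_ex[OF hom_mor[OF g]] by blast
  note H = tri_homs[OF t]
  have v: "v \<in> hom C Z (cod C v)" using H(2) hom_cod[OF g] by simp
  have V: "cod C v \<in> Ob C" using hom_ob2[OF v] .
  have vg: "cmp C v g = zer C Y (cod C v)" using ZC[OF t] hom_dom[OF g] by simp
  have "cmp C v (cmp C g f) = zer C X (cod C v)" using assoc[OF f g v] vg comp_zer_l[OF f V] by simp
  then have "rr (cmp C v (cmp C g f)) n = 0" using rk_zer[OF hom_ob1[OF f] V] by simp
  moreover have "rr (cmp C v (cmp C g f)) n \<ge> rr (cmp C g f) n + rr v n - \<rho> Z n" using SYL[OF comp_hom[OF f g] v] .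
  moreover have "rr g n + rr v n = \<rho> Z n" using tri_sum[OF t] hom_cod[OF g] by simp
  ultimately show ?thesis by linarith
qed

lemma CM2:
  assumes f: "f \<in> hom C X Y" and g: "g \<in> hom C Y Z"
  shows "rr (cmp C g f) n \<le> rr f n"
proof -
  obtain u w where t: "(f, u, w) \<in> tri C" using tr1_ex[OF hom_mor[OF f]] by blast
  note H = tri_homs[OF t]
  have R2: "(w, mneg C (shM C f), mneg C (shM C u)) \<in> tri C" using rot[OF rot[OF t]] .
  have w: "w \<in> hom C (cod C u) (shO C X)" using H(3) hom_dom[OF f] by simp
  have U: "cod C u \<in> Ob C" using hom_ob1[OF w] .
  have sf: "shM C f \<in> hom C (shO C X) (shO C Y)" using sh_hom[OF f] .
  have sg: "shM C g \<in> hom C (shO C Y) (shO C Z)" using sh_hom[OF g] .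
  have "cmp C (mneg C (shM C f)) w = zer C (cod C u) (shO C Y)"
    using ZC[OF R2] hom_dom[OF w] hom_cod[OF neg_hom[OF sf]] by simp
  then have "mneg C (cmp C (shM C f) w) = zer C (cod C u) (shO C Y)" using comp_neg_l[OF w sf] by simp
  then have fw: "cmp C (shM C f) w = zer C (cod C u) (shO C Y)"
    using neg_neg[OF comp_hom[OF w sf]] neg_zer[OF U hom_ob2[OF sf]] by metis
  have sgf: "shM C (cmp C g f) = cmp C (shM C g) (shM C f)" using sh_comp[OF f g] .
  have "cmp C (shM C (cmp C g f)) w = zer C (cod C u) (shO C Z)"
    using sgf assoc[OF w sf sg] fw comp_zer_r[OF sg U] by simp
  then have "rr (cmp C (shM C (cmp C g f)) w) (n + 1) = 0" using rk_zer[OF U hom_ob2[OF sg]] by simp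
  moreover have "rr (cmp C (shM C (cmp C g f)) w) (n + 1) \<ge> rr w (n + 1) + rr (shM C (cmp C g f)) (n + 1) - \<rho> (shO C X) (n + 1)"
    using SYL[OF w sh_hom[OF comp_hom[OF f g]]] .
  moreover have "rr w (n + 1) + rr (mneg C (shM C f)) (n + 1) = \<rho> (shO C X) (n + 1)" using tri_sum[OF R2] hom_cod[OF w] by simp
  moreover have "rr (mneg C (shM C f)) (n + 1) = rr f n" using rk_negsh[OF hom_mor[OF f], of "n + 1"] by simp
  moreover have "rr (shM C (cmp C g f)) (n + 1) = rr (cmp C g f) n" using rk_sh[OF hom_mor[OF comp_hom[OF f g]], of "n + 1"] by simp
  ultimately show ?thesis by linarith
qed

end

context tc begin

lemma EXT:
  assumes X: "X \<in> Ob C" and Z: "Z \<in> Ob C" and p: "p \<in> hom C (dsum C X Z) V" and q: "q \<in> hom C (dsum C X Z) V"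
    and e1: "cmp C p (in1 C X Z) = cmp C q (in1 C X Z)" and e2: "cmp C p (in2 C X Z) = cmp C q (in2 C X Z)"
  shows "p = q"
proof -
  note bp = bip[OF X Z]
  have gen: "\<And>r. r \<in> hom C (dsum C X Z) V \<Longrightarrow> r = madd C (cmp C (cmp C r (in1 C X Z)) (pr1 C X Z)) (cmp C (cmp C r (in2 C X Z)) (pr2 C X Z))"
  proof -
    fix r assume r: "r \<in> hom C (dsum C X Z) V"
    have "r = cmp C r (idm C (dsum C X Z))" using id_r[OF r] by simp
    also have "\<dots> = cmp C r (madd C (cmp C (in1 C X Z) (pr1 C X Z)) (cmp C (in2 C X Z) (pr2 C X Z)))" using bp(10) by simp
    also have "\<dots> = madd C (cmp C r (cmp C (in1 C X Z) (pr1 C X Z))) (cmp C r (cmp C (in2 C X Z) (pr2 C X Z)))"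
      using comp_add_r[OF comp_hom[OF bp(4) bp(2)] comp_hom[OF bp(5) bp(3)] r] .
    also have "\<dots> = madd C (cmp C (cmp C r (in1 C X Z)) (pr1 C X Z)) (cmp C (cmp C r (in2 C X Z)) (pr2 C X Z))"
      using assoc[OF bp(4) bp(2) r] assoc[OF bp(5) bp(3) r] by simp
    finally show "r = madd C (cmp C (cmp C r (in1 C X Z)) (pr1 C X Z)) (cmp C (cmp C r (in2 C X Z)) (pr2 C X Z))" .
  qed
  show ?thesis using gen[OF p] gen[OF q] e1 e2 by simp
qed

lemma mdsum_eq: "f \<in> hom C X Y \<Longrightarrow> g \<in> hom C Z W \<Longrightarrow>
   mdsum C f g = madd C (cmp C (in1 C Y W) (cmp C f (pr1 C X Z))) (cmp C (in2 C Y W) (cmp C g (pr2 C X Z)))"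
  unfolding mdsum_def Let_def using hom_dom hom_cod by metis

lemma mtri_eq: "f \<in> hom C X Y \<Longrightarrow> g \<in> hom C Z W \<Longrightarrow>
   mtri C f h g = madd C (mdsum C f g) (cmp C (in1 C Y W) (cmp C h (pr2 C X Z)))"
  unfolding mtri_def Let_def using hom_dom hom_cod by metis

lemma mdsum:
  assumes f: "f \<in> hom C X Y" and g: "g \<in> hom C Z W"
  shows "mdsum C f g \<in> hom C (dsum C X Z) (dsum C Y W)"
    "cmp C (mdsum C f g) (in1 C X Z) = cmp C (in1 C Y W) f"
    "cmp C (mdsum C f g) (in2 C X Z) = cmp C (in2 C Y W) g"
proof -
  have X: "X \<in> Ob C" and Y: "Y \<in> Ob C" and Z: "Z \<in> Ob C" and W: "W \<in> Ob C"
    using hom_ob1 hom_ob2 f g by auto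
  note b1 = bip[OF X Z] and b2 = bip[OF Y W]
  have t1: "cmp C (in1 C Y W) (cmp C f (pr1 C X Z)) \<in> hom C (dsum C X Z) (dsum C Y W)"
    using comp_hom[OF comp_hom[OF b1(4) f] b2(2)] .
  have t2: "cmp C (in2 C Y W) (cmp C g (pr2 C X Z)) \<in> hom C (dsum C X Z) (dsum C Y W)"
    using comp_hom[OF comp_hom[OF b1(5) g] b2(3)] .
  show "mdsum C f g \<in> hom C (dsum C X Z) (dsum C Y W)" using mdsum_eq[OF f g] add_hom[OF t1 t2] by simp
  have a1: "cmp C (cmp C (in1 C Y W) (cmp C f (pr1 C X Z))) (in1 C X Z) = cmp C (in1 C Y W) f"
    using assoc2[OF b1(2) comp_hom[OF b1(4) f] b2(2)] assoc2[OF b1(2) b1(4) f] b1(6) id_r[OF f] by simp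
  have a2: "cmp C (cmp C (in2 C Y W) (cmp C g (pr2 C X Z))) (in1 C X Z) = zer C X (dsum C Y W)"
    using assoc2[OF b1(2) comp_hom[OF b1(5) g] b2(3)] assoc2[OF b1(2) b1(5) g] b1(8) comp_zer_r[OF g X]
      comp_zer_r[OF b2(3) X] by simp
  show "cmp C (mdsum C f g) (in1 C X Z) = cmp C (in1 C Y W) f"
    using mdsum_eq[OF f g] comp_add_l[OF b1(2) t1 t2] a1 a2 add_zer[OF comp_hom[OF f b2(2)]] by simp
  have a3: "cmp C (cmp C (in1 C Y W) (cmp C f (pr1 C X Z))) (in2 C X Z) = zer C Z (dsum C Y W)"
    using assoc2[OF b1(3) comp_hom[OF b1(4) f] b2(2)] assoc2[OF b1(3) b1(4) f] b1(9) comp_zer_r[OF f Z]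
      comp_zer_r[OF b2(2) Z] by simp
  have a4: "cmp C (cmp C (in2 C Y W) (cmp C g (pr2 C X Z))) (in2 C X Z) = cmp C (in2 C Y W) g"
    using assoc2[OF b1(3) comp_hom[OF b1(5) g] b2(3)] assoc2[OF b1(3) b1(5) g] b1(7) id_r[OF g] by simp
  show "cmp C (mdsum C f g) (in2 C X Z) = cmp C (in2 C Y W) g"
    using mdsum_eq[OF f g] comp_add_l[OF b1(3) t1 t2] a3 a4 zer_add[OF comp_hom[OF g b2(3)]] by simp
qed

lemma mtri:
  assumes f: "f \<in> hom C X Y" and g: "g \<in> hom C Z W" and h: "h \<in> hom C Z Y"
  shows "mtri C f h g \<in> hom C (dsum C X Z) (dsum C Y W)"
    "cmp C (mtri C f h g) (in1 C X Z) = cmp C (in1 C Y W) f"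
    "cmp C (mtri C f h g) (in2 C X Z) = madd C (cmp C (in2 C Y W) g) (cmp C (in1 C Y W) h)"
proof -
  have X: "X \<in> Ob C" and Y: "Y \<in> Ob C" and Z: "Z \<in> Ob C" and W: "W \<in> Ob C"
    using hom_ob1 hom_ob2 f g by auto
  note b1 = bip[OF X Z] and b2 = bip[OF Y W]
  note md = mdsum[OF f g]
  have t: "cmp C (in1 C Y W) (cmp C h (pr2 C X Z)) \<in> hom C (dsum C X Z) (dsum C Y W)"
    using comp_hom[OF comp_hom[OF b1(5) h] b2(2)] .
  show "mtri C f h g \<in> hom C (dsum C X Z) (dsum C Y W)" using mtri_eq[OF f g] add_hom[OF md(1) t] by simp
  have a1: "cmp C (cmp C (in1 C Y W) (cmp C h (pr2 C X Z))) (in1 C X Z) = zer C X (dsum C Y W)"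
    using assoc2[OF b1(2) comp_hom[OF b1(5) h] b2(2)] assoc2[OF b1(2) b1(5) h] b1(8) comp_zer_r[OF h X]
      comp_zer_r[OF b2(2) X] by simp
  show "cmp C (mtri C f h g) (in1 C X Z) = cmp C (in1 C Y W) f"
    using mtri_eq[OF f g] comp_add_l[OF b1(2) md(1) t] md(2) a1 add_zer[OF comp_hom[OF f b2(2)]] by simp
  have a2: "cmp C (cmp C (in1 C Y W) (cmp C h (pr2 C X Z))) (in2 C X Z) = cmp C (in1 C Y W) h"
    using assoc2[OF b1(3) comp_hom[OF b1(5) h] b2(2)] assoc2[OF b1(3) b1(5) h] b1(7) id_r[OF h] by simp
  show "cmp C (mtri C f h g) (in2 C X Z) = madd C (cmp C (in2 C Y W) g) (cmp C (in1 C Y W) h)"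
    using mtri_eq[OF f g] comp_add_l[OF b1(3) md(1) t] md(3) a2 by simp
qed

lemma mtri_zer: "f \<in> hom C X Y \<Longrightarrow> g \<in> hom C Z W \<Longrightarrow> mtri C f (zer C Z Y) g = mdsum C f g"
proof -
  assume f: "f \<in> hom C X Y" and g: "g \<in> hom C Z W"
  have X: "X \<in> Ob C" and Y: "Y \<in> Ob C" and Z: "Z \<in> Ob C" and W: "W \<in> Ob C"
    using hom_ob1 hom_ob2 f g by auto
  note b1 = bip[OF X Z] and b2 = bip[OF Y W]
  have "cmp C (in1 C Y W) (cmp C (zer C Z Y) (pr2 C X Z)) = zer C (dsum C X Z) (dsum C Y W)"
    using comp_zer_l[OF b1(5) Y] comp_zer_r[OF b2(2) b1(1)] by simp
  then show ?thesis using mtri_eq[OF f g] add_zer[OF mdsum(1)[OF f g]] by simp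
qed

lemma compmat:
  assumes f: "f \<in> hom C X Y" and g: "g \<in> hom C Z W" and h: "h \<in> hom C Z Y"
  shows "cmp C (mdsum C (idm C Y) g) (mtri C f h (idm C Z)) = mtri C f h g"
proof -
  have X: "X \<in> Ob C" and Y: "Y \<in> Ob C" and Z: "Z \<in> Ob C" and W: "W \<in> Ob C"
    using hom_ob1 hom_ob2 f g by auto
  note b1 = bip[OF X Z] and b2 = bip[OF Y Z] and b3 = bip[OF Y W]
  note N = mtri[OF f id_hom[OF Z] h] and D = mdsum[OF id_hom[OF Y] g] and M = mtri[OF f g h]
  show ?thesis
  proof (rule EXT[OF X Z comp_hom[OF N(1) D(1)] M(1)])
    show "cmp C (cmp C (mdsum C (idm C Y) g) (mtri C f h (idm C Z))) (in1 C X Z) = cmp C (mtri C f h g) (in1 C X Z)"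
      using assoc2[OF b1(2) N(1) D(1)] N(2) assoc[OF f b2(2) D(1)] D(2) id_r[OF b3(2)] M(2) by simp
    have "cmp C (mdsum C (idm C Y) g) (madd C (cmp C (in2 C Y Z) (idm C Z)) (cmp C (in1 C Y Z) h))
       = madd C (cmp C (mdsum C (idm C Y) g) (cmp C (in2 C Y Z) (idm C Z))) (cmp C (mdsum C (idm C Y) g) (cmp C (in1 C Y Z) h))"
      using comp_add_r[OF comp_hom[OF id_hom[OF Z] b2(3)] comp_hom[OF h b2(2)] D(1)] .
    also have "\<dots> = madd C (cmp C (in2 C Y W) g) (cmp C (in1 C Y W) h)"
      using assoc[OF id_hom[OF Z] b2(3) D(1)] assoc[OF h b2(2) D(1)] D(2) D(3) id_r[OF comp_hom[OF g b3(3)]]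
        id_r[OF b3(2)] by simp
    finally show "cmp C (cmp C (mdsum C (idm C Y) g) (mtri C f h (idm C Z))) (in2 C X Z) = cmp C (mtri C f h g) (in2 C X Z)"
      using assoc2[OF b1(3) N(1) D(1)] N(3) M(3) by simp
  qed
qed

end

context rk begin

lemma LB1:
  assumes f: "f \<in> hom C X Y" and h: "h \<in> hom C Z Y"
  shows "rr (mtri C f h (idm C Z)) n \<ge> rr f n + \<rho> Z n"
proof -
  have X: "X \<in> Ob C" and Y: "Y \<in> Ob C" and Z: "Z \<in> Ob C" using hom_ob1 hom_ob2 f h by auto
  note b1 = bip[OF X Z] and b2 = bip[OF Y Z]
  note N = mtri[OF f id_hom[OF Z] h]
  let ?N = "mtri C f h (idm C Z)"
  obtain u w where t: "(?N, u, w) \<in> tri C" using tr1_ex[OF hom_mor[OF N(1)]] by blast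
  note H = tri_homs[OF t]
  define V where "V = cod C u"
  have u: "u \<in> hom C (dsum C Y Z) V" using H(2) hom_cod[OF N(1)] V_def by simp
  have V: "V \<in> Ob C" using hom_ob2[OF u] .
  have uN: "cmp C u ?N = zer C (dsum C X Z) V" using ZC[OF t] hom_dom[OF N(1)] V_def by simp
  define x where "x = cmp C u (in1 C Y Z)"
  define y where "y = cmp C u (in2 C Y Z)"
  have x: "x \<in> hom C Y V" unfolding x_def using comp_hom[OF b2(2) u] .
  have y: "y \<in> hom C Z V" unfolding y_def using comp_hom[OF b2(3) u] .
  have xf: "cmp C x f = zer C X V"
  proof -
    have "cmp C x f = cmp C u (cmp C ?N (in1 C X Z))" unfolding x_def using assoc2[OF f b2(2) u] N(2) by simp
    also have "\<dots> = zer C X V" using assoc[OF b1(2) N(1) u] uN comp_zer_l[OF b1(2) V] by simp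
    finally show ?thesis .
  qed
  have "cmp C u (cmp C ?N (in2 C X Z)) = zer C Z V" using assoc[OF b1(3) N(1) u] uN comp_zer_l[OF b1(3) V] by simp
  moreover have "cmp C u (cmp C ?N (in2 C X Z)) = madd C y (cmp C x h)"
    using N(3) comp_add_r[OF comp_hom[OF id_hom[OF Z] b2(3)] comp_hom[OF h b2(2)] u] id_r[OF b2(3)]
      assoc[OF h b2(2) u] x_def y_def by simp
  ultimately have "madd C (cmp C x h) y = zer C Z V" using add_comm[OF y comp_hom[OF h x]] by simp
  then have yy: "y = mneg C (cmp C x h)" using neg_unique[OF comp_hom[OF h x] y] by simp
  define E where "E = madd C (pr1 C Y Z) (mneg C (cmp C h (pr2 C Y Z)))"
  have hp: "cmp C h (pr2 C Y Z) \<in> hom C (dsum C Y Z) Y" using comp_hom[OF b2(5) h] .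
  have E: "E \<in> hom C (dsum C Y Z) Y" unfolding E_def using add_hom[OF b2(4) neg_hom[OF hp]] .
  have E1: "cmp C E (in1 C Y Z) = idm C Y"
  proof -
    have "cmp C E (in1 C Y Z) = madd C (cmp C (pr1 C Y Z) (in1 C Y Z)) (cmp C (mneg C (cmp C h (pr2 C Y Z))) (in1 C Y Z))"
      unfolding E_def using comp_add_l[OF b2(2) b2(4) neg_hom[OF hp]] .
    also have "\<dots> = madd C (idm C Y) (mneg C (cmp C h (cmp C (pr2 C Y Z) (in1 C Y Z))))"
      using b2(6) comp_neg_l[OF b2(2) hp] assoc2[OF b2(2) b2(5) h] by simp
    also have "\<dots> = idm C Y" using b2(8) comp_zer_r[OF h Y] neg_zer[OF Y Y] add_zer[OF id_hom[OF Y]] by simp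
    finally show ?thesis .
  qed
  have E2: "cmp C E (in2 C Y Z) = mneg C h"
  proof -
    have "cmp C E (in2 C Y Z) = madd C (cmp C (pr1 C Y Z) (in2 C Y Z)) (cmp C (mneg C (cmp C h (pr2 C Y Z))) (in2 C Y Z))"
      unfolding E_def using comp_add_l[OF b2(3) b2(4) neg_hom[OF hp]] .
    also have "\<dots> = madd C (zer C Z Y) (mneg C (cmp C h (cmp C (pr2 C Y Z) (in2 C Y Z))))"
      using b2(9) comp_neg_l[OF b2(3) hp] assoc2[OF b2(3) b2(5) h] by simp
    also have "\<dots> = mneg C h" using b2(7) id_r[OF h] zer_add[OF neg_hom[OF h]] by simp
    finally show ?thesis .
  qed
  have uxE: "u = cmp C x E"
  proof (rule EXT[OF Y Z u comp_hom[OF E x]])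
    show "cmp C u (in1 C Y Z) = cmp C (cmp C x E) (in1 C Y Z)"
      using assoc2[OF b2(2) E x] E1 id_r[OF x] x_def by simp
    show "cmp C u (in2 C Y Z) = cmp C (cmp C x E) (in2 C Y Z)"
      using assoc2[OF b2(3) E x] E2 comp_neg_r[OF h x] yy y_def by simp
  qed
  have 1: "rr u n \<le> rr x n" using CM1[OF E x] uxE by simp
  have "rr (cmp C x f) n \<ge> rr f n + rr x n - \<rho> Y n" using SYL[OF f x] .
  then have 2: "rr x n \<le> \<rho> Y n - rr f n" using xf rk_zer[OF X V] by simp
  have 3: "rr ?N n + rr u n = \<rho> Y n + \<rho> Z n" using tri_sum[OF t] hom_cod[OF N(1)] rsum[OF Y Z] by simp
  show ?thesis using 1 2 3 by linarith
qed

lemma LB2: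
  assumes g: "g \<in> hom C Z W" and Y: "Y \<in> Ob C"
  shows "rr (mdsum C (idm C Y) g) n \<ge> \<rho> Y n + rr g n"
proof -
  have Z: "Z \<in> Ob C" and W: "W \<in> Ob C" using hom_ob1 hom_ob2 g by auto
  note b1 = bip[OF Y Z] and b2 = bip[OF Y W]
  note D = mdsum[OF id_hom[OF Y] g]
  let ?D = "mdsum C (idm C Y) g"
  obtain u w where t: "(?D, u, w) \<in> tri C" using tr1_ex[OF hom_mor[OF D(1)]] by blast
  note H = tri_homs[OF t]
  define V where "V = cod C u"
  have u: "u \<in> hom C (dsum C Y W) V" using H(2) hom_cod[OF D(1)] V_def by simp
  have V: "V \<in> Ob C" using hom_ob2[OF u] .
  have uD: "cmp C u ?D = zer C (dsum C Y Z) V" using ZC[OF t] hom_dom[OF D(1)] V_def by simp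
  define y where "y = cmp C u (in2 C Y W)"
  have y: "y \<in> hom C W V" unfolding y_def using comp_hom[OF b2(3) u] .
  have x0: "cmp C u (in1 C Y W) = zer C Y V"
  proof -
    have "cmp C u (in1 C Y W) = cmp C u (cmp C ?D (in1 C Y Z))" using D(2) id_r[OF b2(2)] by simp
    also have "\<dots> = zer C Y V" using assoc[OF b1(2) D(1) u] uD comp_zer_l[OF b1(2) V] by simp
    finally show ?thesis .
  qed
  have yg: "cmp C y g = zer C Z V"
  proof -
    have "cmp C y g = cmp C u (cmp C ?D (in2 C Y Z))" unfolding y_def using assoc2[OF g b2(3) u] D(3) by simp
    also have "\<dots> = zer C Z V" using assoc[OF b1(3) D(1) u] uD comp_zer_l[OF b1(3) V] by simp
    finally show ?thesis .
  qed
  have uy: "u = cmp C y (pr2 C Y W)"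
  proof (rule EXT[OF Y W u comp_hom[OF b2(5) y]])
    show "cmp C u (in1 C Y W) = cmp C (cmp C y (pr2 C Y W)) (in1 C Y W)"
      using x0 assoc2[OF b2(2) b2(5) y] b2(8) comp_zer_r[OF y Y] by simp
    show "cmp C u (in2 C Y W) = cmp C (cmp C y (pr2 C Y W)) (in2 C Y W)"
      using assoc2[OF b2(3) b2(5) y] b2(7) id_r[OF y] y_def by simp
  qed
  have 1: "rr u n \<le> rr y n" using CM1[OF b2(5) y] uy by simp
  have "rr (cmp C y g) n \<ge> rr g n + rr y n - \<rho> W n" using SYL[OF g y] .
  then have 2: "rr y n \<le> \<rho> W n - rr g n" using yg rk_zer[OF Z V] by simp
  have 3: "rr ?D n + rr u n = \<rho> Y n + \<rho> W n" using tri_sum[OF t] hom_cod[OF D(1)] rsum[OF Y W] by simp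
  show ?thesis using 1 2 3 by linarith
qed

lemma MT:
  assumes f: "f \<in> hom C X Y" and g: "g \<in> hom C Z W" and h: "h \<in> hom C Z Y"
  shows "rr (mtri C f h g) n \<ge> rr f n + rr g n"
proof -
  have Y: "Y \<in> Ob C" and Z: "Z \<in> Ob C" using hom_ob1 hom_ob2 f g by auto
  note N = mtri[OF f id_hom[OF Z] h] and D = mdsum[OF id_hom[OF Y] g]
  have "rr (mtri C f h g) n \<ge> rr (mtri C f h (idm C Z)) n + rr (mdsum C (idm C Y) g) n - \<rho> (dsum C Y Z) n"
    using SYL[OF N(1) D(1)] compmat[OF f g h] by simp
  then show ?thesis using LB1[OF f h, of n] LB2[OF g Y, of n] rsum[OF Y Z] by simp
qed

lemma MD:
  assumes f: "f \<in> hom C X Y" and g: "g \<in> hom C Z W"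
  shows "rr (mdsum C f g) n = rr f n + rr g n"
proof -
  have X: "X \<in> Ob C" and Y: "Y \<in> Ob C" and Z: "Z \<in> Ob C" and W: "W \<in> Ob C" using hom_ob1 hom_ob2 f g by auto
  have ge: "rr (mdsum C f g) n \<ge> rr f n + rr g n" using MT[OF f g zer_hom[OF Z Y]] mtri_zer[OF f g] by simp
  obtain u w where t1: "(f, u, w) \<in> tri C" using tr1_ex[OF hom_mor[OF f]] by blast
  obtain v j where t2: "(g, v, j) \<in> tri C" using tr1_ex[OF hom_mor[OF g]] by blast
  define A B where "A = cod C u" "B = cod C v"
  have u: "u \<in> hom C Y A" using tri_homs(2)[OF t1] hom_cod[OF f] A_B_def by simp
  have v: "v \<in> hom C W B" using tri_homs(2)[OF t2] hom_cod[OF g] A_B_def by simp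
  have A: "A \<in> Ob C" and B: "B \<in> Ob C" using hom_ob2 u v by auto
  have uf: "cmp C u f = zer C X A" using ZC[OF t1] hom_dom[OF f] A_B_def by simp
  have vg: "cmp C v g = zer C Z B" using ZC[OF t2] hom_dom[OF g] A_B_def by simp
  note M = mdsum[OF f g] and U = mdsum[OF u v]
  note b1 = bip[OF X Z] and b3 = bip[OF A B]
  have UM: "cmp C (mdsum C u v) (mdsum C f g) = zer C (dsum C X Z) (dsum C A B)"
  proof (rule EXT[OF X Z comp_hom[OF M(1) U(1)] zer_hom[OF b1(1) b3(1)]])
    show "cmp C (cmp C (mdsum C u v) (mdsum C f g)) (in1 C X Z) = cmp C (zer C (dsum C X Z) (dsum C A B)) (in1 C X Z)"
      using assoc2[OF b1(2) M(1) U(1)] M(2) assoc[OF f bip(2)[OF Y W] U(1)] U(2) assoc2[OF f u b3(2)] uf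
        comp_zer_r[OF b3(2) X] comp_zer_l[OF b1(2) b3(1)] by simp
    show "cmp C (cmp C (mdsum C u v) (mdsum C f g)) (in2 C X Z) = cmp C (zer C (dsum C X Z) (dsum C A B)) (in2 C X Z)"
      using assoc2[OF b1(3) M(1) U(1)] M(3) assoc[OF g bip(3)[OF Y W] U(1)] U(3) assoc2[OF g v b3(3)] vg
        comp_zer_r[OF b3(3) Z] comp_zer_l[OF b1(3) b3(1)] by simp
  qed
  have "rr (cmp C (mdsum C u v) (mdsum C f g)) n \<ge> rr (mdsum C f g) n + rr (mdsum C u v) n - \<rho> (dsum C Y W) n"
    using SYL[OF M(1) U(1)] .
  then have 1: "0 \<ge> rr (mdsum C f g) n + rr (mdsum C u v) n - \<rho> (dsum C Y W) n"
    using UM rk_zer[OF b1(1) b3(1)] by simp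
  have 2: "rr (mdsum C u v) n \<ge> rr u n + rr v n" using MT[OF u v zer_hom[OF W A]] mtri_zer[OF u v] by simp
  have 3: "rr f n + rr u n = \<rho> Y n" using tri_sum[OF t1] hom_cod[OF f] by simp
  have 4: "rr g n + rr v n = \<rho> W n" using tri_sum[OF t2] hom_cod[OF g] by simp
  show ?thesis using ge 1 2 3 4 rsum[OF Y W, of n] by linarith
qed

end

context rk begin

lemma rk_int:
  assumes HI: "\<forall>(f, g, h) \<in> tri C. \<exists>\<phi>. rd_nonneg d \<phi> \<and> rd_int d \<phi> \<and>
              rd_add (rd_sub (\<rho> (dom C f)) (\<rho> (cod C f))) (\<rho> (cod C g)) = rd_q1 \<phi>"
    and f: "f \<in> Mor C"
  shows "rd_int d (rr f)"
proof -
  obtain g h where t: "(f, g, h) \<in> tri C" and cg: "cone C f = cod C g" using some_tri[OF f] by blast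
  have R: "(g, h, mneg C (shM C f)) \<in> tri C" using rot[OF t] .
  note H = tri_homs[OF t]
  have X: "dom C f \<in> Ob C" using hom_ob1[OF H(1)] .
  obtain \<phi> where phi: "rd_nonneg d \<phi>" "rd_int d \<phi>" "rd_add (rd_sub (\<rho> (dom C g)) (\<rho> (cod C g))) (\<rho> (cod C h)) = rd_q1 \<phi>"
    using HI R by blast
  have "dom C g = cod C f" "cod C h = shO C (dom C f)" using hom_dom[OF H(2)] hom_cod[OF H(3)] by auto
  then have e: "rd_q1 \<phi> = rk_num C \<rho> f" using phi(3) cg ax_a X unfolding rk_num_def by simp
  have pin: "in_Rd d \<phi>" using phi(1) unfolding rd_nonneg_def by simp
  have "rd_q1 (rr f) = rd_q1 \<phi>" using rk_prop[OF f] e by simp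
  then have "rr f = \<phi>" using rk_uniq[OF rk_in[OF f] pin] by simp
  then show ?thesis using phi(2) by simp
qed

lemma rf: "rank_function C d rr"
  unfolding rank_function_def
proof (intro conjI)
  show "\<forall>f \<in> Mor C. rd_nonneg d (rr f)" using rk_prop by blast
  show "\<forall>f \<in> Mor C. rr (shM C f) = rd_q (rr f)" unfolding rd_q_def using rk_sh by auto
  show "\<forall>f \<in> Mor C. \<forall>g \<in> Mor C. rr (mdsum C f g) = rd_add (rr f) (rr g)"
  proof (intro ballI)
    fix f g assume f: "f \<in> Mor C" and g: "g \<in> Mor C"
    show "rr (mdsum C f g) = rd_add (rr f) (rr g)" unfolding rd_add_def using MD[OF mor_hom[OF f] mor_hom[OF g]] by auto
  qed
  show "\<forall>f \<in> Mor C. \<forall>g \<in> Mor C. \<forall>h \<in> hom C (dom C g) (cod C f).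
        rd_ge d (rr (mtri C f h g)) (rd_add (rr f) (rr g))"
  proof (intro ballI)
    fix f g h assume f: "f \<in> Mor C" and g: "g \<in> Mor C" and h: "h \<in> hom C (dom C g) (cod C f)"
    note M = mtri(1)[OF mor_hom[OF f] mor_hom[OF g] h]
    show "rd_ge d (rr (mtri C f h g)) (rd_add (rr f) (rr g))"
      unfolding rd_ge_def rd_nonneg_def rd_sub_def rd_add_def
      using inRd_sub[OF rk_in[OF hom_mor[OF M]] inRd_add[OF rk_in[OF f] rk_in[OF g]]]
        MT[OF mor_hom[OF f] mor_hom[OF g] h] by simp
  qed
  show "\<forall>f \<in> Mor C. \<forall>g \<in> Mor C. cod C f = dom C g \<longrightarrow>
        rd_ge d (rr f) (rr (cmp C g f)) \<and> rd_ge d (rr g) (rr (cmp C g f))"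
  proof (intro ballI impI)
    fix f g assume f: "f \<in> Mor C" and g: "g \<in> Mor C" and c: "cod C f = dom C g"
    have f': "f \<in> hom C (dom C f) (cod C f)" using mor_hom[OF f] .
    have g': "g \<in> hom C (cod C f) (cod C g)" using mor_hom[OF g] c by simp
    have gf: "cmp C g f \<in> Mor C" using hom_mor[OF comp_hom[OF f' g']] .
    show "rd_ge d (rr f) (rr (cmp C g f)) \<and> rd_ge d (rr g) (rr (cmp C g f))"
      unfolding rd_ge_def rd_nonneg_def rd_sub_def
      using inRd_sub[OF rk_in[OF f] rk_in[OF gf]] inRd_sub[OF rk_in[OF g] rk_in[OF gf]]
        CM1[OF f' g'] CM2[OF f' g'] by simp
  qed
  show "\<forall>(f, g, h)\<in>tri C. rd_add (rr f) (rr g) = rr (idm C (cod C f))"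
  proof (intro ballI)
    fix T assume T: "T \<in> tri C"
    obtain f g h where Te: "T = (f, g, h)" by (cases T) auto
    have t: "(f, g, h) \<in> tri C" using T Te by simp
    have Y: "cod C f \<in> Ob C" using hom_ob2[OF tri_homs(1)[OF t]] .
    have "rd_add (rr f) (rr g) = rr (idm C (cod C f))"
      unfolding rd_add_def rk_id[OF Y] using tri_sum[OF t] by auto
    then show "case T of (f, g, h) \<Rightarrow> rd_add (rr f) (rr g) = rr (idm C (cod C f))" using Te by simp
  qed
qed

end

theorem proposition2p12:
  fixes C :: "('o, 'm) tricat" and d :: enat and \<rho> :: "'o \<Rightarrow> rd"
  assumes tri: "triangulated C"
    and d: "d = \<infinity> \<or> (\<exists>m. d = enat m \<and> m > 0 \<and> odd m)"
    and \<rho>R: "\<forall>X \<in> Ob C. in_Rd d (\<rho> X)"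
    and a: "\<forall>X \<in> Ob C. \<rho> (shO C X) = rd_q (\<rho> X)"
    and b: "\<forall>X \<in> Ob C. \<forall>Y \<in> Ob C. \<rho> (dsum C X Y) = rd_add (\<rho> X) (\<rho> Y)"
    and c: "\<forall>(f, g, h) \<in> tri C. \<exists>\<phi>. rd_nonneg d \<phi> \<and>
              rd_add (rd_sub (\<rho> (dom C f)) (\<rho> (cod C f))) (\<rho> (cod C g)) = rd_q1 \<phi>"
  shows "(\<forall>f \<in> Mor C. \<exists>!r. in_Rd d r \<and> rd_q1 r = rk_num C \<rho> f)
       \<and> rank_function C d (rk_of C d \<rho>)
       \<and> ((\<forall>X \<in> Ob C. rd_int d (\<rho> X)) \<and>
          (\<forall>(f, g, h) \<in> tri C. \<exists>\<phi>. rd_nonneg d \<phi> \<and> rd_int d \<phi> \<and>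
              rd_add (rd_sub (\<rho> (dom C f)) (\<rho> (cod C f))) (\<rho> (cod C g)) = rd_q1 \<phi>)
          \<longrightarrow> integral_rank_function C d (rk_of C d \<rho>))"
proof -
  interpret rk C d \<rho>
    by (unfold_locales) (use assms in auto)
  show ?thesis
  proof (intro conjI impI)
    show "\<forall>f \<in> Mor C. \<exists>!r. in_Rd d r \<and> rd_q1 r = rk_num C \<rho> f" using rk_ex1 by blast
    show "rank_function C d (rk_of C d \<rho>)" using rf .
  next
    assume HI: "(\<forall>X \<in> Ob C. rd_int d (\<rho> X)) \<and>
          (\<forall>(f, g, h) \<in> tri C. \<exists>\<phi>. rd_nonneg d \<phi> \<and> rd_int d \<phi> \<and>
              rd_add (rd_sub (\<rho> (dom C f)) (\<rho> (cod C f))) (\<rho> (cod C g)) = rd_q1 \<phi>)"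
    show "integral_rank_function C d (rk_of C d \<rho>)"
      unfolding integral_rank_function_def using rf rk_int HI by blast
  qed
qed

end
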